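(* Let $p\ge3$ be an integer, $\mathbf x_0\in\mathbb R^3$, and $\epsilon$ a real scalar function of class $\mathcal C^p$ in a neighborhood of $\mathbf x_0$ with $\epsilon(\mathbf x_0)\neq0$. Then $\dim\mathbb{QT}_p=2p^2+6p+3$.
   Context: Polynomials are in the variable $\mathbf X-\mathbf x_0$; $\mathbb P_p$ denotes the space of real polynomials of degree at most $p$ in three variables. For a $\mathcal C^q$ function $\varphi$, $T_q[\varphi]$ is its Taylor polynomial of degree $q$ at $\mathbf x_0$ (applied componentwise to vector fields). The quasi-Trefftz space for the Maxwell operator $\mathcal L_M=\nabla\times\nabla\times-\epsilon$ is $$\mathbb{QT}_p=\Big\{\mathbf\Pi\in(\mathbb P_p)^3:\ T_{p-2}\big[\nabla\times\nabla\times\mathbf\Pi-\epsilon\mathbf\Pi\big]=\mathbf 0,\ T_{p-1}\big[\nabla\cdot(\epsilon\mathbf\Pi)\big]=0\Big\}.$$ *)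

theory Defs
  imports "HOL-Analysis.Analysis" "HOL-Library.Function_Algebras"
begin

type_synonym mindex = "nat \<times> nat \<times> nat"

definition mdeg :: "mindex \<Rightarrow> nat" where
  "mdeg a = fst a + fst (snd a) + snd (snd a)"

definition mfact :: "mindex \<Rightarrow> real" where
  "mfact a = fact (fst a) * fact (fst (snd a)) * fact (snd (snd a))"

definition mono :: "mindex \<Rightarrow> real^3 \<Rightarrow> real" where
  "mono a y = (y$1) ^ fst a * (y$2) ^ fst (snd a) * (y$3) ^ snd (snd a)"

definition mindices :: "nat \<Rightarrow> mindex set" where
  "mindices q = {a. mdeg a \<le> q}"

definition evec :: "3 \<Rightarrow> real^3" where
  "evec i = axis i 1"

definition pd :: "3 \<Rightarrow> (real^3 \<Rightarrow> real) \<Rightarrow> real^3 \<Rightarrow> real" where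
  "pd i f x = deriv (\<lambda>t. f (x + t *\<^sub>R evec i)) 0"

definition has_pd :: "3 \<Rightarrow> (real^3 \<Rightarrow> real) \<Rightarrow> real^3 \<Rightarrow> bool" where
  "has_pd i f x = ((\<lambda>t. f (x + t *\<^sub>R evec i)) differentiable (at 0))"

fun Ck_on :: "nat \<Rightarrow> (real^3) set \<Rightarrow> (real^3 \<Rightarrow> real) \<Rightarrow> bool" where
  "Ck_on 0 U f = continuous_on U f"
| "Ck_on (Suc k) U f = (continuous_on U f \<and>
      (\<forall>i. \<forall>x\<in>U. has_pd i f x) \<and> (\<forall>i. Ck_on k U (pd i f)))"

definition mpd :: "mindex \<Rightarrow> (real^3 \<Rightarrow> real) \<Rightarrow> real^3 \<Rightarrow> real" where
  "mpd a f = ((pd 1 ^^ fst a) ((pd 2 ^^ fst (snd a)) ((pd 3 ^^ snd (snd a)) f)))"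

definition taylor :: "nat \<Rightarrow> real^3 \<Rightarrow> (real^3 \<Rightarrow> real) \<Rightarrow> real^3 \<Rightarrow> real" where
  "taylor q x0 f x = (\<Sum>a\<in>mindices q. mpd a f x0 / mfact a * mono a (x - x0))"

definition taylor_vec :: "nat \<Rightarrow> real^3 \<Rightarrow> (real^3 \<Rightarrow> real^3) \<Rightarrow> real^3 \<Rightarrow> real^3" where
  "taylor_vec q x0 F x = (\<chi> i. taylor q x0 (\<lambda>y. F y $ i) x)"

definition polyfield :: "nat \<Rightarrow> real^3 \<Rightarrow> (real^3 \<Rightarrow> real^3) \<Rightarrow> bool" where
  "polyfield p x0 F = (\<exists>c :: mindex \<Rightarrow> real^3.
      \<forall>x. F x = (\<Sum>a\<in>mindices p. mono a (x - x0) *\<^sub>R c a))"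

definition curl :: "(real^3 \<Rightarrow> real^3) \<Rightarrow> real^3 \<Rightarrow> real^3" where
  "curl F x = vector [
      pd 2 (\<lambda>y. F y $ 3) x - pd 3 (\<lambda>y. F y $ 2) x,
      pd 3 (\<lambda>y. F y $ 1) x - pd 1 (\<lambda>y. F y $ 3) x,
      pd 1 (\<lambda>y. F y $ 2) x - pd 2 (\<lambda>y. F y $ 1) x]"

definition divg :: "(real^3 \<Rightarrow> real^3) \<Rightarrow> real^3 \<Rightarrow> real" where
  "divg F x = (\<Sum>i\<in>UNIV. pd i (\<lambda>y. F y $ i) x)"

definition QT :: "nat \<Rightarrow> real^3 \<Rightarrow> (real^3 \<Rightarrow> real) \<Rightarrow> (real^3 \<Rightarrow> real^3) set" where
  "QT p x0 eps = {Pi. polyfield p x0 Pi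
      \<and> taylor_vec (p - 2) x0 (\<lambda>x. curl (curl Pi) x - eps x *\<^sub>R Pi x) = (\<lambda>x. 0)
      \<and> taylor (p - 1) x0 (divg (\<lambda>x. eps x *\<^sub>R Pi x)) = (\<lambda>x. 0)}"

definition fscale :: "real \<Rightarrow> (real^3 \<Rightarrow> real^3) \<Rightarrow> real^3 \<Rightarrow> real^3" where
  "fscale r F = (\<lambda>x. r *\<^sub>R F x)"

end

theory Submission
  imports Defs
begin


lemma norm_evec[simp]: "norm (evec i) = 1"
  by (simp add: evec_def)

lemma evec_nth: "evec i $ k = (if k = i then 1 else 0)"
  by (simp add: evec_def axis_def)

lemma ev_line:
  assumes "open U" "x \<in> U"
  shows "eventually (\<lambda>t. x + t *\<^sub>R evec i \<in> U) (nhds 0)"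
proof -
  obtain e where e: "e > 0" "ball x e \<subseteq> U" using assms openE by blast
  show ?thesis unfolding eventually_nhds_metric
  proof (intro exI[of _ e] conjI allI impI)
    fix t :: real assume "dist t 0 < e"
    then have "dist x (x + t *\<^sub>R evec i) < e" by (simp add: dist_norm)
    then show "x + t *\<^sub>R evec i \<in> U" using e by auto
  qed (use e in auto)
qed

lemma pd_cong:
  assumes "open U" "x \<in> U" "\<And>y. y \<in> U \<Longrightarrow> f y = g y"
  shows "pd i f x = pd i g x"
  unfolding pd_def
  by (rule deriv_cong_ev[OF eventually_mono[OF ev_line[OF assms(1,2), of i]]]) (auto simp: assms(3))

lemma has_pd_cong:
  assumes "open U" "x \<in> U" "\<And>y. y \<in> U \<Longrightarrow> f y = g y"
  shows "has_pd i f x = has_pd i g x"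
proof -
  have ev: "eventually (\<lambda>t. f (x + t *\<^sub>R evec i) = g (x + t *\<^sub>R evec i)) (nhds 0)"
    by (rule eventually_mono[OF ev_line[OF assms(1,2), of i]]) (auto simp: assms(3))
  show ?thesis unfolding has_pd_def real_differentiable_def
    using DERIV_cong_ev[OF refl ev refl] by auto
qed

lemma has_pd_DERIV: "has_pd i f x \<Longrightarrow> ((\<lambda>t. f (x + t *\<^sub>R evec i)) has_real_derivative pd i f x) (at 0)"
  unfolding has_pd_def pd_def using DERIV_deriv_iff_real_differentiable by blast

lemma DERIV_has_pd: "((\<lambda>t. f (x + t *\<^sub>R evec i)) has_real_derivative D) (at 0) \<Longrightarrow> has_pd i f x \<and> pd i f x = D"
  unfolding has_pd_def pd_def using DERIV_imp_deriv real_differentiable_def by blast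

lemma pd_add: "has_pd i f x \<Longrightarrow> has_pd i g x \<Longrightarrow>
   has_pd i (\<lambda>y. f y + g y) x \<and> pd i (\<lambda>y. f y + g y) x = pd i f x + pd i g x"
  by (rule DERIV_has_pd, intro derivative_intros has_pd_DERIV)

lemma pd_diff: "has_pd i f x \<Longrightarrow> has_pd i g x \<Longrightarrow>
   has_pd i (\<lambda>y. f y - g y) x \<and> pd i (\<lambda>y. f y - g y) x = pd i f x - pd i g x"
  by (rule DERIV_has_pd, intro derivative_intros has_pd_DERIV)

lemma pd_mult: "has_pd i f x \<Longrightarrow> has_pd i g x \<Longrightarrow>
   has_pd i (\<lambda>y. f y * g y) x \<and> pd i (\<lambda>y. f y * g y) x = pd i f x * g x + f x * pd i g x"
  by (rule DERIV_has_pd) (auto intro!: derivative_eq_intros has_pd_DERIV)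

lemma pd_const: "has_pd i (\<lambda>y. c) x \<and> pd i (\<lambda>y. c) x = 0"
  by (rule DERIV_has_pd) (auto intro!: derivative_eq_intros)

lemma pd_coord: "has_pd i (\<lambda>y. y $ k - z $ k) x \<and> pd i (\<lambda>y. y $ k - z $ k) x = (if k = i then 1 else 0)"
  by (rule DERIV_has_pd) (auto intro!: derivative_eq_intros simp: evec_nth)

lemma pd_sum: "finite S \<Longrightarrow> (\<And>j. j \<in> S \<Longrightarrow> has_pd i (f j) x) \<Longrightarrow>
   has_pd i (\<lambda>y. \<Sum>j\<in>S. f j y) x \<and> pd i (\<lambda>y. \<Sum>j\<in>S. f j y) x = (\<Sum>j\<in>S. pd i (f j) x)"
proof (induction S rule: finite_induct)
  case empty then show ?case using pd_const[of i 0 x] by simp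
next
  case (insert a S)
  then show ?case using pd_add[of i "f a" x "\<lambda>y. \<Sum>j\<in>S. f j y"] by simp
qed


lemma Ck_on_cont: "Ck_on k U f \<Longrightarrow> continuous_on U f"
  by (cases k) auto

lemma Ck_on_Suc_D: "Ck_on (Suc k) U f \<Longrightarrow> Ck_on k U f"
proof (induction k arbitrary: f)
  case 0 then show ?case by simp
next
  case (Suc k) then show ?case by auto
qed

lemma Ck_on_le: "Ck_on k U f \<Longrightarrow> m \<le> k \<Longrightarrow> Ck_on m U f"
proof (induction k)
  case 0 then show ?case by simp
next
  case (Suc k) then show ?case using Ck_on_Suc_D le_Suc_eq by blast
qed

lemma Ck_on_hasD: "Ck_on (Suc k) U f \<Longrightarrow> x \<in> U \<Longrightarrow> has_pd i f x"
  by auto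

lemma Ck_on_pd: "Ck_on (Suc k) U f \<Longrightarrow> Ck_on k U (pd i f)"
  by auto

lemma Ck_on_pdn: "Ck_on (n + k) U f \<Longrightarrow> Ck_on k U ((pd i ^^ n) f)"
proof (induction n arbitrary: f)
  case 0 then show ?case by simp
next
  case (Suc n)
  then have "Ck_on (n + k) U (pd i f)" by auto
  then show ?case using Suc.IH by (simp add: funpow_Suc_right del: funpow.simps)
qed

lemma Ck_on_cong:
  assumes "open U" "\<And>y. y \<in> U \<Longrightarrow> f y = g y" "Ck_on k U f"
  shows "Ck_on k U g"
  using assms(2,3)
proof (induction k arbitrary: f g)
  case 0
  have "continuous_on U f" using "0.prems"(2) by simp
  then have "continuous_on U g" using continuous_on_cong[of U U f g] "0.prems"(1) by blast
  then show ?case by simp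
next
  case (Suc k)
  have c: "continuous_on U f" using Suc.prems(2) by simp
  have "continuous_on U g" using continuous_on_cong[of U U f g] Suc.prems(1) c by blast
  moreover have "has_pd i g x" if "x \<in> U" for i x
  proof -
    have "has_pd i f x" using Suc.prems(2) that by simp
    then show ?thesis using has_pd_cong[OF assms(1) that, of f g i] Suc.prems(1) by blast
  qed
  moreover have "Ck_on k U (pd i g)" for i
  proof -
    have "Ck_on k U (pd i f)" using Suc.prems(2) by simp
    moreover have "pd i f y = pd i g y" if "y \<in> U" for y
      using pd_cong[OF assms(1) that, of f g i] Suc.prems(1) by blast
    ultimately show ?thesis using Suc.IH[of "pd i f" "pd i g"] by blast
  qed
  ultimately show ?case by simp
qed

lemma Ck_on_const: "Ck_on k U (\<lambda>y. c)"
proof (induction k arbitrary: c)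
  case 0 then show ?case by simp
next
  case (Suc k)
  have "pd i (\<lambda>y. c) = (\<lambda>y. 0)" for i using pd_const by (auto intro!: ext)
  then show ?case using Suc pd_const by simp
qed

lemma Ck_on_coord: "Ck_on k U (\<lambda>y. y $ j - z $ j)"
proof (cases k)
  case 0 then show ?thesis by (simp add: continuous_intros)
next
  case (Suc m)
  have "pd i (\<lambda>y. y $ j - z $ j) = (\<lambda>y. if j = i then 1 else 0)" for i using pd_coord by (auto intro!: ext)
  moreover have "continuous_on U (\<lambda>y. y $ j - z $ j)" by (intro continuous_intros)
  ultimately show ?thesis using Suc pd_coord Ck_on_const[of m U] by simp
qed

lemma Ck_on_add:
  assumes "open U"
  shows "Ck_on k U f \<Longrightarrow> Ck_on k U g \<Longrightarrow> Ck_on k U (\<lambda>y. f y + g y)"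
proof (induction k arbitrary: f g)
  case 0 then show ?case by (simp add: continuous_on_add)
next
  case (Suc k)
  have "Ck_on k U (pd i (\<lambda>y. f y + g y))" for i
  proof -
    have p: "Ck_on k U (pd i f)" "Ck_on k U (pd i g)" using Suc.prems by simp_all
    have "Ck_on k U (\<lambda>y. pd i f y + pd i g y)" by (rule Suc.IH[OF p])
    moreover have "pd i f y + pd i g y = pd i (\<lambda>y. f y + g y) y" if "y \<in> U" for y
      using pd_add[of i f y g] Suc.prems that by simp
    ultimately show ?thesis by (rule Ck_on_cong[OF assms, rotated])
  qed
  moreover have "\<forall>i. \<forall>x\<in>U. has_pd i (\<lambda>y. f y + g y) x"
    using Suc.prems pd_add by simp
  moreover have "continuous_on U (\<lambda>y. f y + g y)" 
    using Suc.prems by (simp add: continuous_on_add)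
  ultimately show ?case by simp
qed

lemma Ck_on_diff:
  assumes "open U"
  shows "Ck_on k U f \<Longrightarrow> Ck_on k U g \<Longrightarrow> Ck_on k U (\<lambda>y. f y - g y)"
proof (induction k arbitrary: f g)
  case 0 then show ?case by (simp add: continuous_on_diff)
next
  case (Suc k)
  have "Ck_on k U (pd i (\<lambda>y. f y - g y))" for i
  proof -
    have p: "Ck_on k U (pd i f)" "Ck_on k U (pd i g)" using Suc.prems by simp_all
    have "Ck_on k U (\<lambda>y. pd i f y - pd i g y)" by (rule Suc.IH[OF p])
    moreover have "pd i f y - pd i g y = pd i (\<lambda>y. f y - g y) y" if "y \<in> U" for y
      using pd_diff[of i f y g] Suc.prems that by simp
    ultimately show ?thesis by (rule Ck_on_cong[OF assms, rotated])
  qed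
  moreover have "\<forall>i. \<forall>x\<in>U. has_pd i (\<lambda>y. f y - g y) x"
    using Suc.prems pd_diff by simp
  moreover have "continuous_on U (\<lambda>y. f y - g y)" 
    using Suc.prems by (simp add: continuous_on_diff)
  ultimately show ?case by simp
qed

lemma Ck_on_mult:
  assumes "open U"
  shows "Ck_on k U f \<Longrightarrow> Ck_on k U g \<Longrightarrow> Ck_on k U (\<lambda>y. f y * g y)"
proof (induction k arbitrary: f g)
  case 0 then show ?case by (simp add: continuous_on_mult)
next
  case (Suc k)
  have fk: "Ck_on k U f" "Ck_on k U g" using Suc.prems Ck_on_Suc_D by blast+
  have "Ck_on k U (pd i (\<lambda>y. f y * g y))" for i
  proof -
    have p: "Ck_on k U (pd i f)" "Ck_on k U (pd i g)" using Suc.prems by simp_all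
    have "Ck_on k U (\<lambda>y. pd i f y * g y + f y * pd i g y)"
      by (intro Ck_on_add[OF assms] Suc.IH p fk)
    moreover have "pd i f y * g y + f y * pd i g y = pd i (\<lambda>y. f y * g y) y" if "y \<in> U" for y
      using pd_mult[of i f y g] Suc.prems that by simp
    ultimately show ?thesis by (rule Ck_on_cong[OF assms, rotated])
  qed
  moreover have "\<forall>i. \<forall>x\<in>U. has_pd i (\<lambda>y. f y * g y) x"
    using Suc.prems pd_mult by simp
  moreover have "continuous_on U (\<lambda>y. f y * g y)" 
    using Suc.prems by (simp add: continuous_on_mult)
  ultimately show ?case by simp
qed

lemma Ck_on_sum:
  assumes "open U" "finite S"
  shows "(\<And>j. j \<in> S \<Longrightarrow> Ck_on k U (f j)) \<Longrightarrow> Ck_on k U (\<lambda>y. \<Sum>j\<in>S. f j y)"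
  using assms(2)
proof (induction S rule: finite_induct)
  case empty then show ?case using Ck_on_const by simp
next
  case (insert a S) then show ?case using Ck_on_add[OF assms(1)] by simp
qed

lemma Ck_on_power:
  assumes "open U"
  shows "Ck_on k U f \<Longrightarrow> Ck_on k U (\<lambda>y. f y ^ n)"
proof (induction n)
  case 0 then show ?case using Ck_on_const[of k U 1] by simp
next
  case (Suc n)
  have "Ck_on k U (\<lambda>y. f y * f y ^ n)" by (rule Ck_on_mult[OF assms Suc.prems Suc.IH[OF Suc.prems]])
  then show ?case by simp
qed

lemma Ck_on_coord': "Ck_on k U (\<lambda>y. (y - z) $ j)"
proof -
  have "(\<lambda>y. (y - z) $ j) = (\<lambda>y. y $ j - z $ j)" by (simp add: fun_eq_iff)
  then show ?thesis using Ck_on_coord by metis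
qed

lemma Ck_on_mono_fun:
  assumes "open U"
  shows "Ck_on k U (\<lambda>y. mono a (y - z))"
  unfolding mono_def
  by (intro Ck_on_mult[OF assms] Ck_on_power[OF assms] Ck_on_coord')


lemma has_pd_DERIV_shift:
  assumes "has_pd i f (z + s *\<^sub>R evec i)"
  shows "((\<lambda>s'. f (z + s' *\<^sub>R evec i)) has_real_derivative pd i f (z + s *\<^sub>R evec i)) (at s)"
proof -
  let ?y = "z + s *\<^sub>R evec i"
  have d: "((\<lambda>h. f (?y + h *\<^sub>R evec i)) has_real_derivative pd i f ?y) (at 0)"
    using has_pd_DERIV[OF assms] .
  have eq: "(\<lambda>s'. f (z + s' *\<^sub>R evec i)) = (\<lambda>s'. (\<lambda>h. f (?y + h *\<^sub>R evec i)) (s' - s))"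
    by (auto intro!: ext simp: algebra_simps)
  have "((\<lambda>s'. (\<lambda>h. f (?y + h *\<^sub>R evec i)) (s' + (- s))) has_real_derivative pd i f ?y) (at s)"
    using DERIV_shift[of "(\<lambda>h. f (?y + h *\<^sub>R evec i))" "pd i f ?y" s "-s"] d by simp
  then show ?thesis by (subst eq) simp
qed

lemma box_mvt:
  assumes U: "open U" and f: "Ck_on 2 U f"
    and box: "\<And>\<sigma> \<tau>. 0 \<le> \<sigma> \<Longrightarrow> \<sigma> \<le> s \<Longrightarrow> 0 \<le> \<tau> \<Longrightarrow> \<tau> \<le> t \<Longrightarrow> x + \<sigma> *\<^sub>R evec i + \<tau> *\<^sub>R evec j \<in> U"
    and st: "0 < s" "0 < t"
  shows "\<exists>\<sigma> \<tau>. 0 < \<sigma> \<and> \<sigma> < s \<and> 0 < \<tau> \<and> \<tau> < t \<and>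
    f (x + s *\<^sub>R evec i + t *\<^sub>R evec j) - f (x + s *\<^sub>R evec i) - f (x + t *\<^sub>R evec j) + f x
      = s * t * pd j (pd i f) (x + \<sigma> *\<^sub>R evec i + \<tau> *\<^sub>R evec j)"
proof -
  have hp1: "has_pd k f y" if "y \<in> U" for k y using f that by (simp add: numeral_2_eq_2)
  have hp2: "has_pd k (pd l f) y" if "y \<in> U" for k l y using f that by (simp add: numeral_2_eq_2)
  define g where "g \<sigma> = f (x + t *\<^sub>R evec j + \<sigma> *\<^sub>R evec i) - f (x + \<sigma> *\<^sub>R evec i)" for \<sigma>
  have "DERIV g \<sigma> :> pd i f (x + t *\<^sub>R evec j + \<sigma> *\<^sub>R evec i) - pd i f (x + \<sigma> *\<^sub>R evec i)"
    if "0 \<le> \<sigma>" "\<sigma> \<le> s" for \<sigma>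
    unfolding g_def
    apply (intro DERIV_diff has_pd_DERIV_shift hp1)
    using box[OF that, of 0] box[OF that, of t] st by (auto simp: algebra_simps)
  from MVT2[OF st(1) this] obtain \<sigma> where s1: "0 < \<sigma>" "\<sigma> < s"
    "g s - g 0 = (s - 0) * (pd i f (x + t *\<^sub>R evec j + \<sigma> *\<^sub>R evec i) - pd i f (x + \<sigma> *\<^sub>R evec i))"
    by blast
  define h where "h \<tau> = pd i f (x + \<sigma> *\<^sub>R evec i + \<tau> *\<^sub>R evec j)" for \<tau>
  have "DERIV h \<tau> :> pd j (pd i f) (x + \<sigma> *\<^sub>R evec i + \<tau> *\<^sub>R evec j)"
    if "0 \<le> \<tau>" "\<tau> \<le> t" for \<tau>
    unfolding h_def
    by (intro has_pd_DERIV_shift hp2 box) (use that s1 in auto)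
  from MVT2[OF st(2) this] obtain \<tau> where t1: "0 < \<tau>" "\<tau> < t"
    "h t - h 0 = (t - 0) * pd j (pd i f) (x + \<sigma> *\<^sub>R evec i + \<tau> *\<^sub>R evec j)"
    by blast
  have "f (x + s *\<^sub>R evec i + t *\<^sub>R evec j) - f (x + s *\<^sub>R evec i) - f (x + t *\<^sub>R evec j) + f x = g s - g 0"
    unfolding g_def by (simp add: algebra_simps)
  also have "\<dots> = s * (h t - h 0)" using s1(3) unfolding h_def by (simp add: algebra_simps)
  also have "\<dots> = s * t * pd j (pd i f) (x + \<sigma> *\<^sub>R evec i + \<tau> *\<^sub>R evec j)" using t1(3) by simp
  finally show ?thesis using s1 t1 by blast
qed

lemma schwarz:
  assumes U: "open U" and f: "Ck_on 2 U f" and x: "x \<in> U"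
  shows "pd i (pd j f) x = pd j (pd i f) x"
proof (cases "i = j")
  case True then show ?thesis by simp
next
  case False
  define A where "A = pd i (pd j f) x"
  define B where "B = pd j (pd i f) x"
  have cA: "continuous_on U (pd i (pd j f))" and cB: "continuous_on U (pd j (pd i f))"
    using f by (simp_all add: numeral_2_eq_2)
  obtain r where r: "r > 0" "ball x r \<subseteq> U" using U x openE by blast
  have key: "\<bar>A - B\<bar> < 2 * e" if e: "e > 0" for e
  proof -
    obtain d1 where d1: "d1 > 0" "\<And>y. y \<in> U \<Longrightarrow> dist y x < d1 \<Longrightarrow> dist (pd i (pd j f) y) A < e"
      using cA x e unfolding continuous_on_iff A_def by metis
    obtain d2 where d2: "d2 > 0" "\<And>y. y \<in> U \<Longrightarrow> dist y x < d2 \<Longrightarrow> dist (pd j (pd i f) y) B < e"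
      using cB x e unfolding continuous_on_iff B_def by metis
    define s where "s = min r (min d1 d2) / 4"
    have s: "s > 0" "2 * s < r" "2 * s < d1" "2 * s < d2" using r d1 d2 by (auto simp: s_def)
    have inU: "x + \<sigma> *\<^sub>R evec k + \<tau> *\<^sub>R evec l \<in> U" and dd: "dist (x + \<sigma> *\<^sub>R evec k + \<tau> *\<^sub>R evec l) x \<le> 2 * s"
      if "0 \<le> \<sigma>" "\<sigma> \<le> s" "0 \<le> \<tau>" "\<tau> \<le> s" for \<sigma> \<tau> k l
    proof -
      have "norm (\<sigma> *\<^sub>R evec k + \<tau> *\<^sub>R evec l) \<le> norm (\<sigma> *\<^sub>R evec k) + norm (\<tau> *\<^sub>R evec l)"
        by (rule norm_triangle_ineq)
      also have "\<dots> \<le> 2 * s" using that by simp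
      finally have n: "norm (\<sigma> *\<^sub>R evec k + \<tau> *\<^sub>R evec l) \<le> 2 * s" .
      then show "dist (x + \<sigma> *\<^sub>R evec k + \<tau> *\<^sub>R evec l) x \<le> 2 * s"
        by (simp add: dist_norm add.assoc)
      then have "dist x (x + \<sigma> *\<^sub>R evec k + \<tau> *\<^sub>R evec l) < r" using s by (simp add: dist_commute)
      then show "x + \<sigma> *\<^sub>R evec k + \<tau> *\<^sub>R evec l \<in> U" using r by auto
    qed
    obtain \<sigma> \<tau> where st1: "0 < \<sigma>" "\<sigma> < s" "0 < \<tau>" "\<tau> < s"
      "f (x + s *\<^sub>R evec i + s *\<^sub>R evec j) - f (x + s *\<^sub>R evec i) - f (x + s *\<^sub>R evec j) + f x
      = s * s * pd j (pd i f) (x + \<sigma> *\<^sub>R evec i + \<tau> *\<^sub>R evec j)"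
      using box_mvt[where x=x and i=i and j=j and s=s and t=s, OF U f inU s(1) s(1)] by blast
    obtain \<sigma>' \<tau>' where st2: "0 < \<sigma>'" "\<sigma>' < s" "0 < \<tau>'" "\<tau>' < s"
      "f (x + s *\<^sub>R evec j + s *\<^sub>R evec i) - f (x + s *\<^sub>R evec j) - f (x + s *\<^sub>R evec i) + f x
      = s * s * pd i (pd j f) (x + \<sigma>' *\<^sub>R evec j + \<tau>' *\<^sub>R evec i)"
      using box_mvt[where x=x and i=j and j=i and s=s and t=s, OF U f inU s(1) s(1)] by blast
    have "s * s * pd j (pd i f) (x + \<sigma> *\<^sub>R evec i + \<tau> *\<^sub>R evec j) = s * s * pd i (pd j f) (x + \<sigma>' *\<^sub>R evec j + \<tau>' *\<^sub>R evec i)"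
      using st1(5) st2(5) by (simp add: algebra_simps)
    then have eq: "pd j (pd i f) (x + \<sigma> *\<^sub>R evec i + \<tau> *\<^sub>R evec j) = pd i (pd j f) (x + \<sigma>' *\<^sub>R evec j + \<tau>' *\<^sub>R evec i)"
      using s(1) by simp
    have "dist (pd i (pd j f) (x + \<sigma>' *\<^sub>R evec j + \<tau>' *\<^sub>R evec i)) A < e"
      using d1(2)[OF inU] dd[of \<sigma>' \<tau>' j i] st2 s by fastforce
    moreover have "dist (pd j (pd i f) (x + \<sigma> *\<^sub>R evec i + \<tau> *\<^sub>R evec j)) B < e"
      using d2(2)[OF inU] dd[of \<sigma> \<tau> i j] st1 s by fastforce
    ultimately show ?thesis using eq by (simp add: dist_real_def)
  qed
  show ?thesis
  proof (rule ccontr)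
    assume "pd i (pd j f) x \<noteq> pd j (pd i f) x"
    then have "\<bar>A - B\<bar> > 0" by (simp add: A_def B_def)
    from key[of "\<bar>A - B\<bar> / 2"] this show False by simp
  qed
qed


context
  fixes U :: "(real^3) set"
  assumes U: "open U"
begin

lemma pdn_cong: "(\<And>y. y \<in> U \<Longrightarrow> f y = g y) \<Longrightarrow> y \<in> U \<Longrightarrow> (pd i ^^ n) f y = (pd i ^^ n) g y"
proof (induction n arbitrary: y)
  case 0 then show ?case by simp
next
  case (Suc n)
  show ?case using pd_cong[OF U Suc.prems(2), of "(pd i ^^ n) f" "(pd i ^^ n) g" i] Suc by simp
qed

lemma pdn_add: "Ck_on n U f \<Longrightarrow> Ck_on n U g \<Longrightarrow> y \<in> U \<Longrightarrow>
   (pd i ^^ n) (\<lambda>y. f y + g y) y = (pd i ^^ n) f y + (pd i ^^ n) g y"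
proof (induction n arbitrary: y)
  case 0 then show ?case by simp
next
  case (Suc n)
  have fg: "Ck_on n U f" "Ck_on n U g" using Suc.prems Ck_on_Suc_D by blast+
  have h: "has_pd i ((pd i ^^ n) f) y" "has_pd i ((pd i ^^ n) g) y"
    using Ck_on_pdn[of n "Suc 0" U f i] Ck_on_pdn[of n "Suc 0" U g i] Suc.prems by simp_all
  have "(pd i ^^ Suc n) (\<lambda>y. f y + g y) y = pd i (\<lambda>y. (pd i ^^ n) f y + (pd i ^^ n) g y) y"
    using pd_cong[OF U Suc.prems(3), of "(pd i ^^ n) (\<lambda>y. f y + g y)" "\<lambda>y. (pd i ^^ n) f y + (pd i ^^ n) g y" i]
      Suc.IH[OF fg] by simp
  also have "\<dots> = (pd i ^^ Suc n) f y + (pd i ^^ Suc n) g y"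
    using pd_add[OF h] by simp
  finally show ?case .
qed

lemma pdn_cmult: "Ck_on n U f \<Longrightarrow> y \<in> U \<Longrightarrow>
   (pd i ^^ n) (\<lambda>y. c * f y) y = c * (pd i ^^ n) f y"
proof (induction n arbitrary: y)
  case 0 then show ?case by simp
next
  case (Suc n)
  have fg: "Ck_on n U f" using Suc.prems Ck_on_Suc_D by blast+
  have h: "has_pd i ((pd i ^^ n) f) y"
    using Ck_on_pdn[of n "Suc 0" U f i] Suc.prems by simp_all
  have "(pd i ^^ Suc n) (\<lambda>y. c * f y) y = pd i (\<lambda>y. c * (pd i ^^ n) f y) y"
    using pd_cong[OF U Suc.prems(2), of "(pd i ^^ n) (\<lambda>y. c * f y)" "\<lambda>y. c * (pd i ^^ n) f y" i]
      Suc.IH[OF fg] by simp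
  also have "\<dots> = c * (pd i ^^ Suc n) f y"
    using pd_mult[OF pd_const[THEN conjunct1] h, of c] pd_const[of i c y] by simp
  finally show ?case .
qed

lemma pdn_comm: "Ck_on (Suc n) U h \<Longrightarrow> y \<in> U \<Longrightarrow> (pd j ^^ n) (pd i h) y = pd i ((pd j ^^ n) h) y"
proof (induction n arbitrary: y)
  case 0 then show ?case by simp
next
  case (Suc n)
  have h1: "Ck_on (Suc n) U h" using Suc.prems Ck_on_Suc_D by blast
  have h2: "Ck_on 2 U ((pd j ^^ n) h)" using Ck_on_pdn[of n 2 U h j] Suc.prems by simp
  have "(pd j ^^ Suc n) (pd i h) y = pd j (pd i ((pd j ^^ n) h)) y"
    using pd_cong[OF U Suc.prems(2), of "(pd j ^^ n) (pd i h)" "pd i ((pd j ^^ n) h)" j] Suc.IH[OF h1]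
    by simp
  also have "\<dots> = pd i (pd j ((pd j ^^ n) h)) y" using schwarz[OF U h2 Suc.prems(2)] by simp
  finally show ?case by simp
qed

lemma mpd_cong: "(\<And>y. y \<in> U \<Longrightarrow> f y = g y) \<Longrightarrow> y \<in> U \<Longrightarrow> mpd a f y = mpd a g y"
  unfolding mpd_def by (intro pdn_cong) auto

lemma mpd_add: "Ck_on (mdeg a) U f \<Longrightarrow> Ck_on (mdeg a) U g \<Longrightarrow> y \<in> U \<Longrightarrow>
   mpd a (\<lambda>y. f y + g y) y = mpd a f y + mpd a g y"
proof -
  obtain a1 a2 a3 where a: "a = (a1, a2, a3)" by (cases a) auto
  assume f: "Ck_on (mdeg a) U f" and g: "Ck_on (mdeg a) U g" and y: "y \<in> U"
  have f3: "Ck_on a3 U f" "Ck_on a3 U g" using f g Ck_on_le by (auto simp: a mdeg_def)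
  have f2: "Ck_on a2 U ((pd 3 ^^ a3) f)" "Ck_on a2 U ((pd 3 ^^ a3) g)"
    using Ck_on_pdn[of a3 a2 U _ 3] Ck_on_le f g by (auto simp: a mdeg_def)
  have f1: "Ck_on a1 U ((pd 2 ^^ a2) ((pd 3 ^^ a3) f))" "Ck_on a1 U ((pd 2 ^^ a2) ((pd 3 ^^ a3) g))"
    using Ck_on_pdn[of a2 a1 U _ 2] Ck_on_pdn[of a3 "a2 + a1" U _ 3] f g
    by (auto simp: a mdeg_def add.commute add.left_commute)
  have "mpd a (\<lambda>y. f y + g y) y = (pd 1 ^^ a1) ((pd 2 ^^ a2) (\<lambda>y. (pd 3 ^^ a3) f y + (pd 3 ^^ a3) g y)) y"
    unfolding mpd_def a prod.sel by (intro pdn_cong y) (auto intro: pdn_add f3)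
  also have "\<dots> = (pd 1 ^^ a1) (\<lambda>y. (pd 2 ^^ a2) ((pd 3 ^^ a3) f) y + (pd 2 ^^ a2) ((pd 3 ^^ a3) g) y) y"
    by (intro pdn_cong y) (auto intro: pdn_add f2)
  also have "\<dots> = mpd a f y + mpd a g y"
    unfolding mpd_def a prod.sel by (auto intro: pdn_add f1 y)
  finally show ?thesis .
qed

lemma mpd_cmult: "Ck_on (mdeg a) U f \<Longrightarrow> y \<in> U \<Longrightarrow>
   mpd a (\<lambda>y. c * f y) y = c * mpd a f y"
proof -
  obtain a1 a2 a3 where a: "a = (a1, a2, a3)" by (cases a) auto
  assume f: "Ck_on (mdeg a) U f" and y: "y \<in> U"
  have f3: "Ck_on a3 U f" using f Ck_on_le by (auto simp: a mdeg_def)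
  have f2: "Ck_on a2 U ((pd 3 ^^ a3) f)"
    using Ck_on_pdn[of a3 a2 U _ 3] Ck_on_le f by (auto simp: a mdeg_def)
  have f1: "Ck_on a1 U ((pd 2 ^^ a2) ((pd 3 ^^ a3) f))"
    using Ck_on_pdn[of a2 a1 U _ 2] Ck_on_pdn[of a3 "a2 + a1" U _ 3] f
    by (auto simp: a mdeg_def add.commute add.left_commute)
  have "mpd a (\<lambda>y. c * f y) y = (pd 1 ^^ a1) ((pd 2 ^^ a2) (\<lambda>y. c * (pd 3 ^^ a3) f y)) y"
    unfolding mpd_def a prod.sel by (intro pdn_cong y) (auto intro: pdn_cmult f3)
  also have "\<dots> = (pd 1 ^^ a1) (\<lambda>y. c * (pd 2 ^^ a2) ((pd 3 ^^ a3) f) y) y"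
    by (intro pdn_cong y) (auto intro: pdn_cmult f2)
  also have "\<dots> = c * mpd a f y"
    unfolding mpd_def a prod.sel by (auto intro: pdn_cmult f1 y)
  finally show ?thesis .
qed

end


definition coef :: "real^3 \<Rightarrow> mindex \<Rightarrow> (real^3 \<Rightarrow> real) \<Rightarrow> real" where
  "coef x0 b f = mpd b f x0 / mfact b"

definition munit :: "3 \<Rightarrow> mindex" where
  "munit i = (if i = 1 then (1,0,0) else if i = 2 then (0,1,0) else (0,0,1))"

definition mc :: "mindex \<Rightarrow> 3 \<Rightarrow> nat" where
  "mc b i = (if i = 1 then fst b else if i = 2 then fst (snd b) else snd (snd b))"

lemma mfact_pos: "mfact b > 0"
  by (simp add: mfact_def)

lemma mfact_munit: "mfact (b + munit i) = real (mc b i + 1) * mfact b"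
  by (cases b) (auto simp: mfact_def munit_def mc_def)

lemma mdeg_munit[simp]: "mdeg (b + munit i) = Suc (mdeg b)"
  by (cases b) (auto simp: mdeg_def munit_def)

context
  fixes U :: "(real^3) set" and x0 :: "real^3"
  assumes U: "open U" and x0: "x0 \<in> U"
begin

lemma mpd_pd:
  assumes h: "Ck_on (Suc (mdeg b)) U h"
  shows "mpd b (pd i h) x0 = mpd (b + munit i) h x0"
proof -
  obtain b1 b2 b3 where b: "b = (b1, b2, b3)" by (cases b) auto
  have h3: "Ck_on (Suc b3) U h" by (rule Ck_on_le[OF h]) (simp add: b mdeg_def)
  have h2: "Ck_on (Suc b2) U ((pd 3 ^^ b3) h)"
    by (rule Ck_on_pdn, rule Ck_on_le[OF h]) (simp add: b mdeg_def)
  consider "i = 1" | "i = 2" | "i = 3" using exhaust_3 by blast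
  then show ?thesis
  proof cases
    case 3
    then show ?thesis unfolding mpd_def b
      by (simp add: munit_def funpow_Suc_right del: funpow.simps)
  next
    case 2
    have "mpd b (pd i h) x0 = (pd 1 ^^ b1) ((pd 2 ^^ b2) (pd 2 ((pd 3 ^^ b3) h))) x0"
      unfolding mpd_def b prod.sel 2
      by (intro pdn_cong[OF U] x0) (auto intro: pdn_comm[OF U h3])
    also have "\<dots> = mpd (b + munit i) h x0"
      unfolding mpd_def b 2 by (simp add: munit_def funpow_Suc_right del: funpow.simps)
    finally show ?thesis .
  next
    case 1
    have "mpd b (pd i h) x0 = (pd 1 ^^ b1) ((pd 2 ^^ b2) (pd 1 ((pd 3 ^^ b3) h))) x0"
      unfolding mpd_def b prod.sel 1
      by (intro pdn_cong[OF U] x0) (auto intro: pdn_comm[OF U h3])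
    also have "\<dots> = (pd 1 ^^ b1) (pd 1 ((pd 2 ^^ b2) ((pd 3 ^^ b3) h))) x0"
      by (intro pdn_cong[OF U] x0) (auto intro: pdn_comm[OF U h2])
    also have "\<dots> = mpd (b + munit i) h x0"
      unfolding mpd_def b 1 by (simp add: munit_def funpow_Suc_right del: funpow.simps)
    finally show ?thesis .
  qed
qed

lemma coef_pd:
  assumes h: "Ck_on (Suc (mdeg b)) U h"
  shows "coef x0 b (pd i h) = real (mc b i + 1) * coef x0 (b + munit i) h"
proof -
  have n: "real (mc b i + 1) > 0" by simp
  have "real (mc b i + 1) * (mpd (b + munit i) h x0 / (real (mc b i + 1) * mfact b)) = mpd (b + munit i) h x0 / mfact b"
    using n mfact_pos[of b] by (simp del: of_nat_Suc)
  then show ?thesis using mpd_pd[OF h, of i] unfolding coef_def mfact_munit by simp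
qed

lemma coef_add: "Ck_on (mdeg a) U f \<Longrightarrow> Ck_on (mdeg a) U g \<Longrightarrow>
   coef x0 a (\<lambda>y. f y + g y) = coef x0 a f + coef x0 a g"
  unfolding coef_def using mpd_add[OF U _ _ x0] by (simp add: add_divide_distrib)

lemma coef_cmult: "Ck_on (mdeg a) U f \<Longrightarrow> coef x0 a (\<lambda>y. c * f y) = c * coef x0 a f"
  unfolding coef_def using mpd_cmult[OF U _ x0] by simp

lemma coef_diff: "Ck_on (mdeg a) U f \<Longrightarrow> Ck_on (mdeg a) U g \<Longrightarrow>
   coef x0 a (\<lambda>y. f y - g y) = coef x0 a f - coef x0 a g"
proof -
  assume f: "Ck_on (mdeg a) U f" and g: "Ck_on (mdeg a) U g"
  have g': "Ck_on (mdeg a) U (\<lambda>y. (-1) * g y)" by (rule Ck_on_mult[OF U Ck_on_const g])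
  have "coef x0 a (\<lambda>y. f y - g y) = coef x0 a (\<lambda>y. f y + (-1) * g y)" by simp
  also have "\<dots> = coef x0 a f - coef x0 a g"
    using coef_add[OF f g'] coef_cmult[OF g, of "-1"] by simp
  finally show ?thesis .
qed

lemma coef_sum: "finite S \<Longrightarrow> (\<And>j. j \<in> S \<Longrightarrow> Ck_on (mdeg a) U (f j)) \<Longrightarrow>
   coef x0 a (\<lambda>y. \<Sum>j\<in>S. f j y) = (\<Sum>j\<in>S. coef x0 a (f j))"
proof (induction S rule: finite_induct)
  case empty
  have "coef x0 a (\<lambda>y. 0) = coef x0 a (\<lambda>y. 0 * 0)" by simp
  also have "\<dots> = 0" using coef_cmult[OF Ck_on_const, of a 0 0] by simp
  finally show ?case by simp
next
  case (insert j S)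
  have "Ck_on (mdeg a) U (\<lambda>y. \<Sum>j\<in>S. f j y)" using insert.prems by (intro Ck_on_sum[OF U insert.hyps(1)]) auto
  then show ?case using insert coef_add[where f="f j" and g="\<lambda>y. \<Sum>j\<in>S. f j y"] by simp
qed

end


lemma mindex_zero_eq[simp]: "(0::mindex) = (0,0,0)"
  by (simp add: zero_prod_def)

definition mle :: "mindex \<Rightarrow> mindex \<Rightarrow> bool" where
  "mle a b = (fst a \<le> fst b \<and> fst (snd a) \<le> fst (snd b) \<and> snd (snd a) \<le> snd (snd b))"

definition msub :: "mindex \<Rightarrow> mindex \<Rightarrow> mindex" where
  "msub b a = (fst b - fst a, fst (snd b) - fst (snd a), snd (snd b) - snd (snd a))"

lemma mc_add_munit: "mc (b + munit j) l = mc b l + (if l = j then 1 else 0)"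
  using exhaust_3[of j] exhaust_3[of l] by (cases b) (auto simp: mc_def munit_def)

lemma mindex_eq_iff: "a = b \<longleftrightarrow> (\<forall>i. mc a i = mc b i)"
  by (cases a; cases b) (auto simp: mc_def forall_3)

lemma mindex_decomp: "mc b j \<ge> 1 \<Longrightarrow> \<exists>b'. b = b' + munit j"
proof -
  assume "mc b j \<ge> 1"
  then show ?thesis using exhaust_3[of j]
    by (cases b) (auto simp: mc_def munit_def Suc_le_eq dest!: gr0_implies_Suc)
qed

lemma mindex_nonzero: "b \<noteq> 0 \<Longrightarrow> \<exists>j. mc b j \<ge> 1"
proof -
  assume "b \<noteq> 0"
  then have "fst b \<ge> 1 \<or> fst (snd b) \<ge> 1 \<or> snd (snd b) \<ge> 1" by (cases b) (auto simp: zero_prod_def)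
  then show ?thesis
  proof (elim disjE)
    assume "fst b \<ge> 1" then show ?thesis by (intro exI[of _ 1]) (simp add: mc_def)
  next
    assume "fst (snd b) \<ge> 1" then show ?thesis by (intro exI[of _ 2]) (simp add: mc_def)
  next
    assume "snd (snd b) \<ge> 1" then show ?thesis by (intro exI[of _ 3]) (simp add: mc_def)
  qed
qed

lemma mdeg_mc: "mdeg b = mc b 1 + mc b 2 + mc b 3"
  by (simp add: mdeg_def mc_def)

lemma mdeg_zero: "mdeg b = 0 \<longleftrightarrow> b = 0"
  by (cases b) (auto simp: mdeg_def)

lemma mfact_zero[simp]: "mfact (0,0,0) = 1"
  by (simp add: mfact_def)

lemma mpd_zero[simp]: "mpd (0,0,0) f = f"
  by (simp add: mpd_def)

lemma mono_zero[simp]: "mono (0,0,0) y = 1"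
  by (simp add: mono_def)

lemma mono_munit: "mono (a + munit i) y = mono a y * y $ i"
  using exhaust_3[of i] by (cases a) (auto simp: mono_def munit_def)

lemma pdn_const: "(pd i ^^ n) (\<lambda>y. c) = (\<lambda>y. if n = 0 then c else 0)"
proof (induction n)
  case 0 then show ?case by simp
next
  case (Suc n)
  have "pd i (\<lambda>y. d) = (\<lambda>y. 0)" for d using pd_const by (auto intro!: ext)
  then show ?case using Suc by simp
qed

lemma mpd_const: "mpd a (\<lambda>y. c) x = (if a = 0 then c else 0)"
  by (cases a) (simp add: mpd_def pdn_const)

lemma coef_const: "coef x0 a (\<lambda>y. c) = (if a = 0 then c else 0)"
  by (simp add: coef_def mpd_const)

lemma coef_zero: "coef x0 (0,0,0) f = f x0"
  by (simp add: coef_def)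

context
  fixes U :: "(real^3) set" and x0 :: "real^3"
  assumes U: "open U" and x0: "x0 \<in> U"
begin

lemma coef_cong:
  assumes "\<And>y. y \<in> U \<Longrightarrow> f y = g y" shows "coef x0 a f = coef x0 a g"
  unfolding coef_def using mpd_cong[OF U assms x0] by simp

lemma pd_fY:
  assumes f: "Ck_on (Suc k) U f" and y: "y \<in> U"
  shows "pd j (\<lambda>y. f y * (y $ i - x0 $ i)) y = pd j f y * (y $ i - x0 $ i) + (if i = j then f y else 0)"
  using pd_mult[of j f y "\<lambda>y. y $ i - x0 $ i"] pd_coord[of j i x0 y] f y by auto

lemma Ck_fY: "Ck_on k U f \<Longrightarrow> Ck_on k U (\<lambda>y. f y * (y $ i - x0 $ i))"
  by (rule Ck_on_mult[OF U _ Ck_on_coord])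

lemma coord_mult_aux:
  "\<forall>b f k. mdeg b = n \<longrightarrow> Ck_on k U f \<longrightarrow>
     (mdeg b \<le> k \<longrightarrow> mc b i = 0 \<longrightarrow> coef x0 b (\<lambda>y. f y * (y $ i - x0 $ i)) = 0) \<and>
     (mdeg b < k \<longrightarrow> coef x0 (b + munit i) (\<lambda>y. f y * (y $ i - x0 $ i)) = coef x0 b f)"
proof (induction n rule: less_induct)
  case (less n)
  have M0: "coef x0 b (\<lambda>y. f y * (y $ i - x0 $ i)) = 0"
    if b: "mdeg b = n" and f: "Ck_on k U f" and bk: "mdeg b \<le> k" and bi: "mc b i = 0" for b f k
  proof (cases "b = 0")
    case True
    then show ?thesis by (simp add: coef_zero)
  next
    case False
    obtain j where j: "mc b j \<ge> 1" using mindex_nonzero[OF False] by blast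
    obtain b' where b': "b = b' + munit j" using mindex_decomp[OF j] by blast
    have ji: "j \<noteq> i" using j bi by auto
    obtain k' where k': "k = Suc k'" using bk b' by (cases k) auto
    have dl: "mdeg b' < n" "mdeg b' \<le> k'" using b b' bk k' by auto
    have fk: "Ck_on (Suc (mdeg b')) U (\<lambda>y. f y * (y $ i - x0 $ i))"
      by (rule Ck_on_le[OF Ck_fY[OF f]]) (use bk b' in simp)
    have pf: "Ck_on k' U (pd j f)" using f k' by simp
    have "real (mc b' j + 1) * coef x0 b (\<lambda>y. f y * (y $ i - x0 $ i))
        = coef x0 b' (pd j (\<lambda>y. f y * (y $ i - x0 $ i)))"
      using coef_pd[OF U x0 fk, of j] b' by simp
    also have "\<dots> = coef x0 b' (\<lambda>y. pd j f y * (y $ i - x0 $ i))"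
      by (rule coef_cong) (use pd_fY f k' ji in auto)
    also have "\<dots> = 0"
    proof -
      have "mc b' i = 0" using bi b' mc_add_munit[of b' j i] ji by simp
      then show ?thesis using less.IH[OF dl(1), rule_format, OF refl pf, THEN conjunct1] dl(2) by blast
    qed
    finally show ?thesis by simp
  qed
  have M1: "coef x0 (b + munit i) (\<lambda>y. f y * (y $ i - x0 $ i)) = coef x0 b f"
    if b: "mdeg b = n" and f: "Ck_on k U f" and bk: "mdeg b < k" for b f k
  proof -
    obtain k' where k': "k = Suc k'" using bk by (cases k) auto
    have fk: "Ck_on (Suc (mdeg b)) U (\<lambda>y. f y * (y $ i - x0 $ i))"
      by (rule Ck_on_le[OF Ck_fY[OF f]]) (use bk in simp)
    have pf: "Ck_on k' U (pd i f)" using f k' by simp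
    have pfY: "Ck_on (mdeg b) U (\<lambda>y. pd i f y * (y $ i - x0 $ i))"
      by (rule Ck_on_le[OF Ck_fY[OF pf]]) (use bk k' in simp)
    have fb: "Ck_on (mdeg b) U f" by (rule Ck_on_le[OF f]) (use bk in simp)
    have key: "coef x0 b (\<lambda>y. pd i f y * (y $ i - x0 $ i)) = real (mc b i) * coef x0 b f"
    proof (cases "mc b i = 0")
      case True
      then show ?thesis using M0[OF b pf _ True] bk k' by simp
    next
      case False
      then obtain b' where b': "b = b' + munit i" using mindex_decomp[of b i] by auto
      have dl: "mdeg b' < n" "mdeg b' < k'" using b b' bk k' by auto
      have "coef x0 b (\<lambda>y. pd i f y * (y $ i - x0 $ i)) = coef x0 b' (pd i f)"
        using less.IH[OF dl(1), rule_format, OF refl pf, THEN conjunct2] dl(2) b' by simp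
      also have "\<dots> = real (mc b' i + 1) * coef x0 b f"
        using coef_pd[OF U x0 Ck_on_le[OF f], of b' i] bk b' by simp
      also have "\<dots> = real (mc b i) * coef x0 b f" using b' mc_add_munit[of b' i i] by simp
      finally show ?thesis .
    qed
    have "real (mc b i + 1) * coef x0 (b + munit i) (\<lambda>y. f y * (y $ i - x0 $ i))
        = coef x0 b (pd i (\<lambda>y. f y * (y $ i - x0 $ i)))"
      using coef_pd[OF U x0 fk, of i] by simp
    also have "\<dots> = coef x0 b (\<lambda>y. pd i f y * (y $ i - x0 $ i) + f y)"
      by (rule coef_cong) (use pd_fY f k' in auto)
    also have "\<dots> = real (mc b i) * coef x0 b f + coef x0 b f"
      using coef_add[OF U x0 pfY fb] key by simp
    also have "\<dots> = real (mc b i + 1) * coef x0 b f" by (simp add: algebra_simps)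
    finally show ?thesis by (simp del: of_nat_Suc)
  qed
  show ?case using M0 M1 by blast
qed

lemma coord_mult1:
  "Ck_on k U f \<Longrightarrow> mdeg b < k \<Longrightarrow>
     coef x0 (b + munit i) (\<lambda>y. f y * (y $ i - x0 $ i)) = coef x0 b f"
  using coord_mult_aux by blast

lemma coord_mult0:
  "Ck_on k U f \<Longrightarrow> mdeg b \<le> k \<Longrightarrow> mc b i = 0 \<Longrightarrow>
     coef x0 b (\<lambda>y. f y * (y $ i - x0 $ i)) = 0"
  using coord_mult_aux by blast

end


lemma mle_munit: "mle (a + munit i) (b + munit i) = mle a b"
  using exhaust_3[of i] by (cases a; cases b) (auto simp: mle_def munit_def)

lemma msub_munit: "msub (b + munit i) (a + munit i) = msub b a"
  using exhaust_3[of i] by (cases a; cases b) (auto simp: msub_def munit_def)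

lemma not_mle_munit: "mc b i = 0 \<Longrightarrow> \<not> mle (a + munit i) b"
  using exhaust_3[of i] by (cases a; cases b) (auto simp: mle_def munit_def mc_def)

lemma mle_zero[simp]: "mle (0,0,0) b" by (simp add: mle_def)
lemma msub_zero[simp]: "msub b (0,0,0) = b" by (simp add: msub_def)

lemma mle_msub_zero: "mle a b \<and> msub b a = (0,0,0) \<longleftrightarrow> a = b"
  by (cases a; cases b) (auto simp: mle_def msub_def)

lemma finite_mindices: "finite (mindices N)"
proof -
  have "mindices N \<subseteq> {0..N} \<times> {0..N} \<times> {0..N}" by (auto simp: mindices_def mdeg_def)
  then show ?thesis by (rule finite_subset) auto
qed

lemma mdeg_munit_pos: "mdeg (a + munit i) = Suc (mdeg a)" by simp

context
  fixes U :: "(real^3) set" and x0 :: "real^3"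
  assumes U: "open U" and x0: "x0 \<in> U"
begin

lemma coef_mono_mult_aux:
  "\<forall>a b f k. mdeg a = n \<longrightarrow> Ck_on k U f \<longrightarrow> mdeg b \<le> k \<longrightarrow>
     coef x0 b (\<lambda>y. f y * mono a (y - x0)) = (if mle a b then coef x0 (msub b a) f else 0)"
proof (induction n)
  case 0
  show ?case
  proof (intro allI impI)
    fix a b f k assume "mdeg a = 0"
    then have a: "a = (0,0,0)" using mdeg_zero by simp
    show "coef x0 b (\<lambda>y. f y * mono a (y - x0)) = (if mle a b then coef x0 (msub b a) f else 0)"
      by (simp add: a)
  qed
next
  case (Suc n)
  show ?case
  proof (intro allI impI)
    fix a b f k assume a: "mdeg a = Suc n" and f: "Ck_on k U f" and bk: "mdeg b \<le> k"
    have "a \<noteq> 0" using a by (auto simp: mdeg_def)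
    then obtain i where "mc a i \<ge> 1" using mindex_nonzero by blast
    then obtain a' where a': "a = a' + munit i" using mindex_decomp by blast
    have a'n: "mdeg a' = n" using a a' by simp
    define g where "g y = f y * mono a' (y - x0)" for y
    have g: "Ck_on k U g" unfolding g_def by (intro Ck_on_mult[OF U f Ck_on_mono_fun[OF U]])
    have eq: "(\<lambda>y. f y * mono a (y - x0)) = (\<lambda>y. g y * (y $ i - x0 $ i))"
      by (simp add: a' g_def mono_munit fun_eq_iff)
    show "coef x0 b (\<lambda>y. f y * mono a (y - x0)) = (if mle a b then coef x0 (msub b a) f else 0)"
    proof (cases "mc b i = 0")
      case True
      then show ?thesis unfolding eq using coord_mult0[OF U x0 g bk True] not_mle_munit[OF True] a' by simp
    next
      case False
      then obtain b' where b': "b = b' + munit i" using mindex_decomp[of b i] by auto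
      have "coef x0 b (\<lambda>y. g y * (y $ i - x0 $ i)) = coef x0 b' g"
        using coord_mult1[OF U x0 g, of b' i] b' bk by simp
      also have "\<dots> = (if mle a' b' then coef x0 (msub b' a') f else 0)"
        using Suc.IH[rule_format, OF a'n f, of b'] bk b' unfolding g_def by simp
      finally show ?thesis unfolding eq using b' a' mle_munit msub_munit by simp
    qed
  qed
qed

lemma coef_mono_mult:
  "Ck_on k U f \<Longrightarrow> mdeg b \<le> k \<Longrightarrow>
     coef x0 b (\<lambda>y. f y * mono a (y - x0)) = (if mle a b then coef x0 (msub b a) f else 0)"
  using coef_mono_mult_aux by blast

lemma coef_poly:
  "coef x0 b (\<lambda>y. \<Sum>a\<in>mindices N. d a * mono a (y - x0)) = (if b \<in> mindices N then d b else 0)"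
proof -
  have c: "Ck_on (mdeg b) U (\<lambda>y. d a * mono a (y - x0))" for a
    by (intro Ck_on_mult[OF U Ck_on_const Ck_on_mono_fun[OF U]])
  have m: "coef x0 b (\<lambda>y. mono a (y - x0)) = (if a = b then 1 else 0)" for a
  proof -
    have "coef x0 b (\<lambda>y. mono a (y - x0)) = coef x0 b (\<lambda>y. 1 * mono a (y - x0))" by simp
    also have "\<dots> = (if a = b then 1 else 0)"
      using coef_mono_mult[OF Ck_on_const[of "mdeg b" U 1] order_refl, where a=a] mle_msub_zero[of a b]
      by (auto simp: coef_const)
    finally show ?thesis .
  qed
  have "coef x0 b (\<lambda>y. \<Sum>a\<in>mindices N. d a * mono a (y - x0)) = (\<Sum>a\<in>mindices N. coef x0 b (\<lambda>y. d a * mono a (y - x0)))"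
    by (rule coef_sum[OF U x0 finite_mindices c])
  also have "\<dots> = (\<Sum>a\<in>mindices N. d a * (if a = b then 1 else 0))"
    by (intro sum.cong refl) (simp add: coef_cmult[OF U x0 Ck_on_mono_fun[OF U]] m)
  also have "\<dots> = (if b \<in> mindices N then d b else 0)"
    by (simp add: finite_mindices if_distrib sum.delta' cong: if_cong)
  finally show ?thesis .
qed

end


definition Pol :: "nat \<Rightarrow> real^3 \<Rightarrow> (mindex \<Rightarrow> real^3) \<Rightarrow> real^3 \<Rightarrow> real^3" where
  "Pol p x0 c = (\<lambda>x. \<Sum>a\<in>mindices p. mono a (x - x0) *\<^sub>R c a)"

definition carr :: "real^3 \<Rightarrow> (real^3 \<Rightarrow> real^3) \<Rightarrow> 3 \<Rightarrow> mindex \<Rightarrow> real" where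
  "carr x0 F l b = coef x0 b (\<lambda>y. F y $ l)"

definition smooth :: "(real^3) set \<Rightarrow> (real^3 \<Rightarrow> real^3) \<Rightarrow> bool" where
  "smooth U F = (\<forall>l k. Ck_on k U (\<lambda>y. F y $ l))"

definition dc :: "3 \<Rightarrow> (mindex \<Rightarrow> real) \<Rightarrow> mindex \<Rightarrow> real" where
  "dc i X b = real (mc b i + 1) * X (b + munit i)"

definition curlc :: "(3 \<Rightarrow> mindex \<Rightarrow> real) \<Rightarrow> 3 \<Rightarrow> mindex \<Rightarrow> real" where
  "curlc D j = (if j = 1 then (\<lambda>b. dc 2 (D 3) b - dc 3 (D 2) b)
     else if j = 2 then (\<lambda>b. dc 3 (D 1) b - dc 1 (D 3) b)
     else (\<lambda>b. dc 1 (D 2) b - dc 2 (D 1) b))"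

definition kap :: "nat \<Rightarrow> (mindex \<Rightarrow> real) \<Rightarrow> (3 \<Rightarrow> mindex \<Rightarrow> real) \<Rightarrow> 3 \<Rightarrow> mindex \<Rightarrow> real" where
  "kap p e C i b = (\<Sum>a\<in>mindices p. (if mle a b then e (msub b a) else 0) * C i a)"

definition Af :: "nat \<Rightarrow> (mindex \<Rightarrow> real) \<Rightarrow> (3 \<Rightarrow> mindex \<Rightarrow> real) \<Rightarrow> 3 \<Rightarrow> mindex \<Rightarrow> real" where
  "Af p e C i b = curlc (curlc C) i b - kap p e C i b"

definition Bf :: "nat \<Rightarrow> (mindex \<Rightarrow> real) \<Rightarrow> (3 \<Rightarrow> mindex \<Rightarrow> real) \<Rightarrow> mindex \<Rightarrow> real" where
  "Bf p e C b = (\<Sum>i\<in>UNIV. dc i (kap p e C i) b)"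

lemma Pol_comp: "Pol p x0 c x $ l = (\<Sum>a\<in>mindices p. c a $ l * mono a (x - x0))"
  by (simp add: Pol_def sum_component mult.commute)

lemma Pol_smooth: "open U \<Longrightarrow> smooth U (Pol p x0 c)"
  unfolding smooth_def Pol_comp
  by (auto intro!: Ck_on_sum finite_mindices Ck_on_mult Ck_on_const Ck_on_mono_fun)

lemma carr_Pol: "carr x0 (Pol p x0 c) l b = (if b \<in> mindices p then c b $ l else 0)"
  unfolding carr_def Pol_comp by (rule coef_poly[of UNIV]) auto

lemma curl_comp:
  "curl F x $ 1 = pd 2 (\<lambda>y. F y $ 3) x - pd 3 (\<lambda>y. F y $ 2) x"
  "curl F x $ 2 = pd 3 (\<lambda>y. F y $ 1) x - pd 1 (\<lambda>y. F y $ 3) x"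
  "curl F x $ 3 = pd 1 (\<lambda>y. F y $ 2) x - pd 2 (\<lambda>y. F y $ 1) x"
  by (simp_all add: curl_def)

context
  fixes U :: "(real^3) set" and x0 :: "real^3"
  assumes U: "open U" and x0: "x0 \<in> U"
begin

lemma smooth_pd: "Ck_on (Suc k) U f \<Longrightarrow> Ck_on k U (pd i f)" by simp

lemma curl_smooth: "smooth U F \<Longrightarrow> smooth U (curl F)"
  unfolding smooth_def
proof (intro allI)
  fix l :: 3 and k :: nat assume F: "\<forall>l k. Ck_on k U (\<lambda>y. F y $ l)"
  have d: "Ck_on k U (pd i (\<lambda>y. F y $ j))" for i j using F smooth_pd by blast
  consider "l = 1" | "l = 2" | "l = 3" using exhaust_3 by blast
  then show "Ck_on k U (\<lambda>y. curl F y $ l)"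
    by cases (simp_all only: curl_comp; rule Ck_on_diff[OF U d d])+
qed

lemma carr_curl:
  assumes F: "smooth U F"
  shows "carr x0 (curl F) j b = curlc (carr x0 F) j b"
proof -
  have d: "Ck_on k U (pd i (\<lambda>y. F y $ l))" for i l k
  proof -
    have "Ck_on (Suc k) U (\<lambda>y. F y $ l)" using F unfolding smooth_def by blast
    then show ?thesis by simp
  qed
  have c: "Ck_on (Suc (mdeg b)) U (\<lambda>y. F y $ l)" for l using F unfolding smooth_def by blast
  have cp: "coef x0 b (pd i (\<lambda>y. F y $ l)) = dc i (carr x0 F l) b" for i l
    unfolding dc_def carr_def by (rule coef_pd[OF U x0 c])
  consider "j = 1" | "j = 2" | "j = 3" using exhaust_3 by blast
  then show ?thesis
  proof cases
    case 1 then show ?thesis unfolding carr_def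
      by (simp add: curl_comp coef_diff[OF U x0 d d] cp[unfolded carr_def] curlc_def)
  next
    case 2 then show ?thesis unfolding carr_def
      by (simp add: curl_comp coef_diff[OF U x0 d d] cp[unfolded carr_def] curlc_def)
  next
    case 3 then show ?thesis unfolding carr_def
      by (simp add: curl_comp coef_diff[OF U x0 d d] cp[unfolded carr_def] curlc_def)
  qed
qed

end


lemma taylor_eq:
  "taylor q x0 f = (\<lambda>x. \<Sum>a\<in>mindices q. coef x0 a f * mono a (x - x0))"
  by (simp add: taylor_def coef_def fun_eq_iff)

lemma taylor_zero_iff: "taylor q x0 f = (\<lambda>x. 0) \<longleftrightarrow> (\<forall>b\<in>mindices q. coef x0 b f = 0)"
proof
  assume h: "taylor q x0 f = (\<lambda>x. 0)"
  show "\<forall>b\<in>mindices q. coef x0 b f = 0"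
  proof
    fix b assume b: "b \<in> mindices q"
    have "coef x0 b (taylor q x0 f) = coef x0 b f"
      unfolding taylor_eq using coef_poly[of UNIV x0 b, where N=q and d="\<lambda>a. coef x0 a f"] b by simp
    then show "coef x0 b f = 0" using h coef_const[of x0 b 0] by (auto split: if_splits)
  qed
next
  assume "\<forall>b\<in>mindices q. coef x0 b f = 0"
  then show "taylor q x0 f = (\<lambda>x. 0)" unfolding taylor_eq by simp
qed

lemma taylor_vec_zero_iff:
  "taylor_vec q x0 F = (\<lambda>x. 0) \<longleftrightarrow> (\<forall>i. \<forall>b\<in>mindices q. coef x0 b (\<lambda>y. F y $ i) = 0)"
proof -
  have "taylor_vec q x0 F = (\<lambda>x. 0) \<longleftrightarrow> (\<forall>i. taylor q x0 (\<lambda>y. F y $ i) = (\<lambda>x. 0))"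
    by (auto simp: taylor_vec_def fun_eq_iff vec_eq_iff)
  then show ?thesis using taylor_zero_iff by simp
qed

context
  fixes U :: "(real^3) set" and x0 :: "real^3" and p :: nat and eps :: "real^3 \<Rightarrow> real"
  assumes U: "open U" and x0: "x0 \<in> U" and eps: "Ck_on p U eps"
begin

lemma epsPol: "Ck_on p U (\<lambda>y. eps y * Pol p x0 c y $ i)"
  using Pol_smooth[OF U] unfolding smooth_def by (intro Ck_on_mult[OF U eps]) blast

lemma coef_epsPol:
  assumes b: "mdeg b \<le> p"
  shows "coef x0 b (\<lambda>y. eps y * Pol p x0 c y $ i) = kap p (\<lambda>d. coef x0 d eps) (carr x0 (Pol p x0 c)) i b"
proof -
  have e: "Ck_on (mdeg b) U eps" by (rule Ck_on_le[OF eps b])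
  have m: "Ck_on (mdeg b) U (\<lambda>y. eps y * mono a (y - x0))" for a
    by (intro Ck_on_mult[OF U e Ck_on_mono_fun[OF U]])
  have "coef x0 b (\<lambda>y. eps y * Pol p x0 c y $ i) = coef x0 b (\<lambda>y. \<Sum>a\<in>mindices p. c a $ i * (eps y * mono a (y - x0)))"
    by (simp add: Pol_comp sum_distrib_left mult_ac)
  also have "\<dots> = (\<Sum>a\<in>mindices p. coef x0 b (\<lambda>y. c a $ i * (eps y * mono a (y - x0))))"
    by (rule coef_sum[OF U x0 finite_mindices]) (intro Ck_on_mult[OF U Ck_on_const m])
  also have "\<dots> = (\<Sum>a\<in>mindices p. c a $ i * (if mle a b then coef x0 (msub b a) eps else 0))"
    by (intro sum.cong refl) (simp add: coef_cmult[OF U x0 m] coef_mono_mult[OF U x0 e order_refl])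
  also have "\<dots> = kap p (\<lambda>d. coef x0 d eps) (carr x0 (Pol p x0 c)) i b"
    unfolding kap_def carr_Pol by (intro sum.cong refl) auto
  finally show ?thesis .
qed

lemma coef_R:
  assumes b: "mdeg b \<le> p"
  shows "coef x0 b (\<lambda>x. (curl (curl (Pol p x0 c)) x - eps x *\<^sub>R Pol p x0 c x) $ i)
     = Af p (\<lambda>d. coef x0 d eps) (carr x0 (Pol p x0 c)) i b"
proof -
  have s1: "smooth U (curl (Pol p x0 c))" by (rule curl_smooth[OF U x0 Pol_smooth[OF U]])
  have s2: "smooth U (curl (curl (Pol p x0 c)))" by (rule curl_smooth[OF U x0 s1])
  have c2: "Ck_on (mdeg b) U (\<lambda>y. curl (curl (Pol p x0 c)) y $ i)" using s2 unfolding smooth_def by blast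
  have c3: "Ck_on (mdeg b) U (\<lambda>y. eps y * Pol p x0 c y $ i)" by (rule Ck_on_le[OF epsPol b])
  have "coef x0 b (\<lambda>x. (curl (curl (Pol p x0 c)) x - eps x *\<^sub>R Pol p x0 c x) $ i)
      = coef x0 b (\<lambda>y. curl (curl (Pol p x0 c)) y $ i - eps y * Pol p x0 c y $ i)" by simp
  also have "\<dots> = carr x0 (curl (curl (Pol p x0 c))) i b - coef x0 b (\<lambda>y. eps y * Pol p x0 c y $ i)"
    unfolding carr_def by (rule coef_diff[OF U x0 c2 c3])
  also have "\<dots> = Af p (\<lambda>d. coef x0 d eps) (carr x0 (Pol p x0 c)) i b"
  proof -
    have "carr x0 (curl (Pol p x0 c)) = curlc (carr x0 (Pol p x0 c))"
      by (intro ext carr_curl[OF U x0 Pol_smooth[OF U]])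
    then show ?thesis unfolding Af_def carr_curl[OF U x0 s1] coef_epsPol[OF b] by simp
  qed
  finally show ?thesis .
qed

lemma coef_D:
  assumes b: "Suc (mdeg b) \<le> p"
  shows "coef x0 b (divg (\<lambda>x. eps x *\<^sub>R Pol p x0 c x)) = Bf p (\<lambda>d. coef x0 d eps) (carr x0 (Pol p x0 c)) b"
proof -
  have K: "Ck_on (Suc (mdeg b)) U (\<lambda>y. eps y * Pol p x0 c y $ i)" for i by (rule Ck_on_le[OF epsPol b])
  have "divg (\<lambda>x. eps x *\<^sub>R Pol p x0 c x) = (\<lambda>x. \<Sum>i\<in>UNIV. pd i (\<lambda>y. eps y * Pol p x0 c y $ i) x)"
    by (simp add: divg_def fun_eq_iff)
  then have "coef x0 b (divg (\<lambda>x. eps x *\<^sub>R Pol p x0 c x)) = (\<Sum>i\<in>UNIV. coef x0 b (pd i (\<lambda>y. eps y * Pol p x0 c y $ i)))"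
    using coef_sum[OF U x0 finite, of UNIV b "\<lambda>i. pd i (\<lambda>y. eps y * Pol p x0 c y $ i)"] K by simp
  also have "\<dots> = Bf p (\<lambda>d. coef x0 d eps) (carr x0 (Pol p x0 c)) b"
    unfolding Bf_def
  proof (intro sum.cong refl)
    fix i
    have "coef x0 b (pd i (\<lambda>y. eps y * Pol p x0 c y $ i)) = real (mc b i + 1) * coef x0 (b + munit i) (\<lambda>y. eps y * Pol p x0 c y $ i)"
      by (rule coef_pd[OF U x0 K])
    also have "\<dots> = dc i (kap p (\<lambda>d. coef x0 d eps) (carr x0 (Pol p x0 c)) i) b"
      unfolding dc_def using coef_epsPol[of "b + munit i" c i] b by simp
    finally show "coef x0 b (pd i (\<lambda>y. eps y * Pol p x0 c y $ i)) = dc i (kap p (\<lambda>d. coef x0 d eps) (carr x0 (Pol p x0 c)) i) b" .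
  qed
  finally show ?thesis .
qed

lemma QT_iff:
  assumes p: "p \<ge> 2"
  shows "Pol p x0 c \<in> QT p x0 eps \<longleftrightarrow>
    (\<forall>i. \<forall>b\<in>mindices (p - 2). Af p (\<lambda>d. coef x0 d eps) (carr x0 (Pol p x0 c)) i b = 0) \<and>
    (\<forall>b\<in>mindices (p - 1). Bf p (\<lambda>d. coef x0 d eps) (carr x0 (Pol p x0 c)) b = 0)"
proof -
  have pf: "polyfield p x0 (Pol p x0 c)" unfolding polyfield_def Pol_def by blast
  have A: "taylor_vec (p - 2) x0 (\<lambda>x. curl (curl (Pol p x0 c)) x - eps x *\<^sub>R Pol p x0 c x) = (\<lambda>x. 0) \<longleftrightarrow>
    (\<forall>i. \<forall>b\<in>mindices (p - 2). Af p (\<lambda>d. coef x0 d eps) (carr x0 (Pol p x0 c)) i b = 0)"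
    unfolding taylor_vec_zero_iff using coef_R p by (auto simp: mindices_def)
  have B: "taylor (p - 1) x0 (divg (\<lambda>x. eps x *\<^sub>R Pol p x0 c x)) = (\<lambda>x. 0) \<longleftrightarrow>
    (\<forall>b\<in>mindices (p - 1). Bf p (\<lambda>d. coef x0 d eps) (carr x0 (Pol p x0 c)) b = 0)"
    unfolding taylor_zero_iff using coef_D p by (auto simp: mindices_def)
  show ?thesis unfolding QT_def using pf A B by simp
qed

end


lemma cc1_expl: "curlc (curlc C) 1 (b1,b2,b3) =
   real (b2+1) * real (b1+1) * C 2 (b1+1,b2+1,b3) - real (b2+1) * real (b2+2) * C 1 (b1,b2+2,b3)
 - real (b3+1) * real (b3+2) * C 1 (b1,b2,b3+2) + real (b3+1) * real (b1+1) * C 3 (b1+1,b2,b3+1)"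
  by (simp add: curlc_def dc_def mc_def munit_def algebra_simps)

lemma cc2_expl: "curlc (curlc C) 2 (b1,b2,b3) =
   real (b3+1) * real (b2+1) * C 3 (b1,b2+1,b3+1) - real (b3+1) * real (b3+2) * C 2 (b1,b2,b3+2)
 - real (b1+1) * real (b1+2) * C 2 (b1+2,b2,b3) + real (b1+1) * real (b2+1) * C 1 (b1+1,b2+1,b3)"
  by (simp add: curlc_def dc_def mc_def munit_def algebra_simps)

lemma cc3_expl: "curlc (curlc C) 3 (b1,b2,b3) =
   real (b1+1) * real (b3+1) * C 1 (b1+1,b2,b3+1) - real (b1+1) * real (b1+2) * C 3 (b1+2,b2,b3)
 - real (b2+1) * real (b2+2) * C 3 (b1,b2+2,b3) + real (b2+1) * real (b3+1) * C 2 (b1,b2+1,b3+1)"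
  by (simp add: curlc_def dc_def mc_def munit_def algebra_simps)

lemma Bf_expl: "Bf p e C (b1,b2,b3) = real (b1+1) * kap p e C 1 (b1+1,b2,b3)
   + real (b2+1) * kap p e C 2 (b1,b2+1,b3) + real (b3+1) * kap p e C 3 (b1,b2,b3+1)"
  by (simp add: Bf_def sum_3 dc_def mc_def munit_def)

lemma dc_diff: "dc i (\<lambda>b. X b - Y b) b = dc i X b - dc i Y b"
  by (simp add: dc_def algebra_simps)

lemma dc_comm: "dc i (dc j X) b = dc j (dc i X) b"
proof -
  have "b + munit i + munit j = b + munit j + munit i" by (simp add: add_ac)
  then show ?thesis unfolding dc_def mc_add_munit by (simp add: algebra_simps)
qed

lemma div_curlc: "(\<Sum>i\<in>UNIV. dc i (curlc D i) b) = 0"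
proof -
  have "(\<Sum>i\<in>UNIV. dc i (curlc D i) b) =
     (dc 1 (dc 2 (D 3)) b - dc 2 (dc 1 (D 3)) b) + (dc 2 (dc 3 (D 1)) b - dc 3 (dc 2 (D 1)) b)
     + (dc 3 (dc 1 (D 2)) b - dc 1 (dc 3 (D 2)) b)"
    by (simp add: sum_3 curlc_def dc_diff)
  also have "\<dots> = 0" by (simp add: dc_comm[of 1 2] dc_comm[of 2 3] dc_comm[of 3 1])
  finally show ?thesis .
qed

lemma consistency: "(\<Sum>i\<in>UNIV. dc i (Af p e C i) b) = - Bf p e C b"
proof -
  have "(\<Sum>i\<in>UNIV. dc i (Af p e C i) b) = (\<Sum>i\<in>UNIV. dc i (curlc (curlc C) i) b) - Bf p e C b"
    unfolding Af_def Bf_def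
    by (simp add: dc_diff[where X="curlc (curlc C) i" and Y="kap p e C i" for i, unfolded] sum_subtractf)
  then show ?thesis using div_curlc[of "curlc C" b] by simp
qed

lemma mle_lt: "mle a b \<Longrightarrow> a \<noteq> b \<Longrightarrow> mdeg a < mdeg b"
  by (cases a; cases b) (auto simp: mle_def mdeg_def)

lemma msub_self[simp]: "msub b b = (0,0,0)"
  by (simp add: msub_def)

lemma mle_refl[simp]: "mle b b"
  by (simp add: mle_def)

lemma kap_low:
  assumes supp: "\<And>i a. a \<notin> mindices p \<Longrightarrow> C i a = 0"
    and low: "\<And>i a. mdeg a < mdeg b \<Longrightarrow> C i a = 0"
  shows "kap p e C i b = e (0,0,0) * C i b"
proof -
  have "kap p e C i b = (\<Sum>a\<in>mindices p. (if a = b then e (0,0,0) * C i b else 0))"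
    unfolding kap_def by (intro sum.cong refl) (auto dest: mle_lt simp: low)
  also have "\<dots> = e (0,0,0) * C i b"
    using supp[of b i] by (simp add: finite_mindices)
  finally show ?thesis .
qed


definition Free :: "nat \<Rightarrow> (3 \<times> mindex) set" where
  "Free p = {(i,a). a \<in> mindices p \<and> ((i = 1 \<and> fst a = 0 \<and> fst (snd a) \<le> 1) \<or> (i \<noteq> 1 \<and> fst a \<le> 1))}"

lemma pivot:
  assumes supp: "\<And>i a. a \<notin> mindices p \<Longrightarrow> C i a = 0"
    and e0: "e (0,0,0) \<noteq> 0"
    and HA: "\<And>i b. mdeg b + 2 \<le> p \<Longrightarrow> Af p e C i b = 0"
    and HB: "\<And>b. mdeg b + 1 \<le> p \<Longrightarrow> Bf p e C b = 0"
    and HF: "\<And>i a. (i,a) \<in> Free p \<Longrightarrow> C i a = 0"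
  shows "C i a = 0"
proof -
  have main: "\<forall>a. mdeg a = d \<longrightarrow> (\<forall>i. C i a = 0)" for d
  proof (induction d rule: less_induct)
    case (less d)
    have low: "C i a = 0" if "mdeg a < d" for i a using less.IH that by blast
    show ?case
    proof (cases "d \<le> p")
      case False then show ?thesis using supp by (auto simp: mindices_def)
    next
      case True
      have kapz: "kap p e C i b = 0" if "mdeg b < d" for i b
        using kap_low[OF supp, where b=b and e=e and i=i] low that by simp
      have kapd: "kap p e C i b = e (0,0,0) * C i b" if "mdeg b = d" for i b
        using kap_low[OF supp, where b=b and e=e and i=i] low that by simp
      have S1: "C 1 (0, m, a3) = 0" if "m + a3 = d" for m a3
        using that
      proof (induction m arbitrary: a3 rule: less_induct)
        case (less m)
        show ?case
        proof (cases "m \<le> 1")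
          case True
          then show ?thesis using HF[of 1 "(0,m,a3)"] less.prems \<open>d \<le> p\<close>
            by (simp add: Free_def mindices_def mdeg_def)
        next
          case False
          define m' where "m' = m - 2"
          then have m: "m = m' + 2" using False by simp
          have A: "Af p e C 1 (0, m', a3) = 0" using HA[of "(0, m', a3)" 1] less.prems \<open>d \<le> p\<close> m
            by (simp add: mdeg_def)
          have k: "kap p e C 1 (0, m', a3) = 0" using kapz less.prems m by (simp add: mdeg_def)
          have f1: "C 2 (1, m' + 1, a3) = 0" using HF[of 2 "(1, m'+1, a3)"] less.prems \<open>d \<le> p\<close> m
            by (simp add: Free_def mindices_def mdeg_def)
          have f2: "C 3 (1, m', a3 + 1) = 0" using HF[of 3 "(1, m', a3 + 1)"] less.prems \<open>d \<le> p\<close> m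
            by (simp add: Free_def mindices_def mdeg_def)
          have f3: "C 1 (0, m', a3 + 2) = 0" using less.IH[of m' "a3 + 2"] less.prems m by simp
          have "real (m' + 1) * real (m' + 2) * C 1 (0, m' + 2, a3) = 0"
            using A k f1 f2 f3 unfolding Af_def cc1_expl by (simp add: add.commute)
          then show ?thesis using m by simp
        qed
      qed
      have S2: "\<forall>a2 a3. k + a2 + a3 = d \<longrightarrow> (\<forall>i. C i (k, a2, a3) = 0)" for k
      proof (induction k rule: less_induct)
        case (less k)
        show ?case
        proof (intro allI impI)
          fix a2 a3 i assume deg: "k + a2 + a3 = d"
          have IHk: "C j (kq, bq, cq) = 0" if "kq < k" "kq + bq + cq = d" for j kq bq cq
            using less.IH that by blast
          have c1: "C 1 (k, a2, a3) = 0"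
          proof (cases k)
            case 0 then show ?thesis using S1[of a2 a3] deg by simp
          next
            case (Suc k')
            have B: "Bf p e C (k', a2, a3) = 0" using HB[of "(k', a2, a3)"] deg Suc \<open>d \<le> p\<close>
              by (simp add: mdeg_def)
            have z2: "C 2 (k', a2 + 1, a3) = 0" using IHk[where j=2 and kq=k' and bq="a2+1" and cq=a3] Suc deg by simp
            have z3: "C 3 (k', a2, a3 + 1) = 0" using IHk[where j=3 and kq=k' and bq=a2 and cq="a3+1"] Suc deg by simp
            have "real (k' + 1) * (e (0,0,0) * C 1 (k, a2, a3)) = 0"
              using B unfolding Bf_expl using kapd[of "(k'+1, a2, a3)"] kapd[of "(k', a2+1, a3)"] kapd[of "(k', a2, a3+1)"]
                z2 z3 deg Suc by (simp add: mdeg_def)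
            then show ?thesis using e0 by simp
          qed
          have c23: "C j (k, a2, a3) = 0" if j: "j \<noteq> 1" for j
          proof (cases "k \<le> 1")
            case True
            then show ?thesis using HF[of j "(k, a2, a3)"] j deg \<open>d \<le> p\<close>
              by (simp add: Free_def mindices_def mdeg_def)
          next
            case False
            define k' where "k' = k - 2"
            then have kk: "k = k' + 2" using False by simp
            have A: "Af p e C j (k', a2, a3) = 0" using HA[of "(k', a2, a3)" j] deg \<open>d \<le> p\<close> kk
              by (simp add: mdeg_def)
            have k0: "kap p e C j (k', a2, a3) = 0" using kapz deg kk by (simp add: mdeg_def)
            consider (A1) "j = 2" | (A2) "j = 3" using j exhaust_3 by blast
            then show ?thesis
            proof cases
              case A1
              have z1: "C 3 (k', a2 + 1, a3 + 1) = 0" using IHk[where kq=k'] kk deg by simp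
              have z2: "C 2 (k', a2, a3 + 2) = 0" using IHk[where kq=k'] kk deg by simp
              have z3: "C 1 (k' + 1, a2 + 1, a3) = 0" using IHk[where kq="k'+1"] kk deg by simp
              have "real (k' + 1) * real (k' + 2) * C 2 (k' + 2, a2, a3) = 0"
                using A k0 z1 z2 z3 unfolding Af_def A1 cc2_expl by simp
              then show ?thesis using kk A1 by simp
            next
              case A2
              have z1: "C 1 (k' + 1, a2, a3 + 1) = 0" using IHk[where kq="k'+1"] kk deg by simp
              have z2: "C 3 (k', a2 + 2, a3) = 0" using IHk[where kq=k'] kk deg by simp
              have z3: "C 2 (k', a2 + 1, a3 + 1) = 0" using IHk[where kq=k'] kk deg by simp
              have "real (k' + 1) * real (k' + 2) * C 3 (k' + 2, a2, a3) = 0"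
                using A k0 z1 z2 z3 unfolding Af_def A2 cc3_expl by simp
              then show ?thesis using kk A2 by simp
            qed
          qed
          show "C i (k, a2, a3) = 0" using c1 c23 by (cases "i = 1") auto
        qed
      qed
      show ?thesis
      proof (intro allI impI)
        fix a i assume "mdeg a = d"
        then show "C i a = 0" using S2 by (cases a) (auto simp: mdeg_def)
      qed
    qed
  qed
  then show ?thesis by blast
qed


definition NF :: "nat \<Rightarrow> (3 \<times> mindex) set" where
  "NF p = (UNIV \<times> mindices p) - Free p"

definition Eq :: "nat \<Rightarrow> (mindex \<Rightarrow> real) \<Rightarrow> (3 \<Rightarrow> mindex \<Rightarrow> real) \<Rightarrow> 3 \<times> mindex \<Rightarrow> real" where
  "Eq p e C j = (case j of (i, a1, a2, a3) \<Rightarrow>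
     if i = 1 then (if a1 \<ge> 1 then Bf p e C (a1 - 1, a2, a3) else Af p e C 1 (a1, a2 - 2, a3))
     else Af p e C i (a1 - 2, a2, a3))"

lemma EQV:
  assumes p: "p \<ge> 2"
  shows "((\<forall>i. \<forall>b\<in>mindices (p - 2). Af p e C i b = 0) \<and> (\<forall>b\<in>mindices (p - 1). Bf p e C b = 0))
     \<longleftrightarrow> (\<forall>j\<in>NF p. Eq p e C j = 0)"
proof
  assume H: "(\<forall>i. \<forall>b\<in>mindices (p - 2). Af p e C i b = 0) \<and> (\<forall>b\<in>mindices (p - 1). Bf p e C b = 0)"
  show "\<forall>j\<in>NF p. Eq p e C j = 0"
  proof
    fix j assume j: "j \<in> NF p"
    obtain i a1 a2 a3 where jj: "j = (i, a1, a2, a3)" by (cases j) auto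
    have deg: "a1 + a2 + a3 \<le> p" and nf: "\<not> ((i = 1 \<and> a1 = 0 \<and> a2 \<le> 1) \<or> (i \<noteq> 1 \<and> a1 \<le> 1))"
      using j by (auto simp: NF_def Free_def mindices_def mdeg_def jj)
    show "Eq p e C j = 0"
    proof (cases "i = 1")
      case True
      show ?thesis
      proof (cases "a1 \<ge> 1")
        case True
        then show ?thesis using H deg \<open>i = 1\<close> by (auto simp: Eq_def jj mindices_def mdeg_def)
      next
        case False
        then show ?thesis using H deg nf \<open>i = 1\<close> by (auto simp: Eq_def jj mindices_def mdeg_def)
      qed
    next
      case False
      then show ?thesis using H deg nf by (auto simp: Eq_def jj mindices_def mdeg_def)
    qed
  qed
next
  assume H: "\<forall>j\<in>NF p. Eq p e C j = 0"
  have HB: "Bf p e C b = 0" if "b \<in> mindices (p - 1)" for b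
  proof -
    obtain b1 b2 b3 where b: "b = (b1, b2, b3)" by (cases b) auto
    have "(1, b1 + 1, b2, b3) \<in> NF p" using that p by (auto simp: NF_def Free_def mindices_def mdeg_def b)
    then show ?thesis using H by (auto simp: Eq_def b)
  qed
  have HA23: "Af p e C i b = 0" if "b \<in> mindices (p - 2)" "i \<noteq> 1" for i b
  proof -
    obtain b1 b2 b3 where b: "b = (b1, b2, b3)" by (cases b) auto
    have "(i, b1 + 2, b2, b3) \<in> NF p" using that p by (auto simp: NF_def Free_def mindices_def mdeg_def b)
    then show ?thesis using H that(2) by (auto simp: Eq_def b)
  qed
  have HA1: "Af p e C 1 b = 0" if "b \<in> mindices (p - 2)" for b
  proof -
    obtain b1 b2 b3 where b: "b = (b1, b2, b3)" by (cases b) auto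
    show ?thesis
    proof (cases b1)
      case 0
      have "(1, 0, b2 + 2, b3) \<in> NF p" using that p by (auto simp: NF_def Free_def mindices_def mdeg_def b)
      then show ?thesis using H 0 by (auto simp: Eq_def b)
    next
      case (Suc b1')
      have "(\<Sum>i\<in>UNIV. dc i (Af p e C i) (b1', b2, b3)) = - Bf p e C (b1', b2, b3)" by (rule consistency)
      moreover have "Bf p e C (b1', b2, b3) = 0" using HB that p Suc by (simp add: mindices_def mdeg_def b)
      moreover have "Af p e C 2 (b1', b2 + 1, b3) = 0" using HA23[of "(b1', b2 + 1, b3)" 2] that Suc
        by (simp add: mindices_def mdeg_def b)
      moreover have "Af p e C 3 (b1', b2, b3 + 1) = 0" using HA23[of "(b1', b2, b3 + 1)" 3] that Suc
        by (simp add: mindices_def mdeg_def b)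
      ultimately have "real (b1' + 1) * Af p e C 1 (b1' + 1, b2, b3) = 0"
        by (simp add: sum_3 dc_def mc_def munit_def)
      then show ?thesis using Suc b by simp
    qed
  qed
  show "(\<forall>i. \<forall>b\<in>mindices (p - 2). Af p e C i b = 0) \<and> (\<forall>b\<in>mindices (p - 1). Bf p e C b = 0)"
  proof (intro conjI allI ballI)
    fix i :: 3 and b assume "b \<in> mindices (p - 2)"
    then show "Af p e C i b = 0" using HA1 HA23 by (cases "i = 1") auto
  qed (use HB in auto)
qed

lemma dc_add: "dc i (\<lambda>b. X b + Y b) b = dc i X b + dc i Y b"
  by (simp add: dc_def algebra_simps)
lemma dc_scale: "dc i (\<lambda>b. r * X b) b = r * dc i X b"
  by (simp add: dc_def algebra_simps)

lemma curlc_add: "curlc (\<lambda>i a. C i a + D i a) j b = curlc C j b + curlc D j b"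
  by (simp add: curlc_def dc_def algebra_simps)
lemma curlc_scale: "curlc (\<lambda>i a. r * C i a) j b = r * curlc C j b"
  by (simp add: curlc_def dc_def algebra_simps)

lemma curlc_add_fun: "curlc (\<lambda>i a. C i a + D i a) = (\<lambda>j b. curlc C j b + curlc D j b)"
  by (simp add: curlc_add fun_eq_iff)
lemma curlc_scale_fun: "curlc (\<lambda>i a. r * C i a) = (\<lambda>j b. r * curlc C j b)"
  by (simp add: curlc_scale fun_eq_iff)

lemma kap_add: "kap p e (\<lambda>i a. C i a + D i a) j b = kap p e C j b + kap p e D j b"
  by (simp add: kap_def algebra_simps sum.distrib)
lemma kap_scale: "kap p e (\<lambda>i a. r * C i a) j b = r * kap p e C j b"
  by (simp add: kap_def algebra_simps sum_distrib_left)

lemma Af_add: "Af p e (\<lambda>i a. C i a + D i a) j b = Af p e C j b + Af p e D j b"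
  by (simp add: Af_def curlc_add_fun curlc_add kap_add)
lemma Af_scale: "Af p e (\<lambda>i a. r * C i a) j b = r * Af p e C j b"
  by (simp add: Af_def curlc_scale_fun curlc_scale kap_scale algebra_simps)

lemma Bf_add: "Bf p e (\<lambda>i a. C i a + D i a) b = Bf p e C b + Bf p e D b"
proof -
  have "kap p e (\<lambda>i a. C i a + D i a) i = (\<lambda>b. kap p e C i b + kap p e D i b)" for i
    by (simp add: kap_add fun_eq_iff)
  then show ?thesis by (simp add: Bf_def dc_add sum.distrib)
qed
lemma Bf_scale: "Bf p e (\<lambda>i a. r * C i a) b = r * Bf p e C b"
proof -
  have "kap p e (\<lambda>i a. r * C i a) i = (\<lambda>b. r * kap p e C i b)" for i
    by (simp add: kap_scale fun_eq_iff)
  then show ?thesis by (simp add: Bf_def dc_scale sum_distrib_left)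
qed

lemma Eq_add: "Eq p e (\<lambda>i a. C i a + D i a) j = Eq p e C j + Eq p e D j"
  by (cases j) (simp add: Eq_def Af_add Bf_add)
lemma Eq_scale: "Eq p e (\<lambda>i a. r * C i a) j = r * Eq p e C j"
  by (cases j) (simp add: Eq_def Af_scale Bf_scale)


interpretation FS: vector_space fscale
  by unfold_locales (auto simp: fscale_def fun_eq_iff algebra_simps)

context vector_space
begin

lemma dim_ker_step:
  assumes T: "subspace T" and TB: "T \<subseteq> span B0" and B0: "finite B0"
    and add: "\<And>x y. x \<in> T \<Longrightarrow> y \<in> T \<Longrightarrow> \<phi> (x + y) = \<phi> x + \<phi> y"
    and sc: "\<And>r x. x \<in> T \<Longrightarrow> \<phi> (scale r x) = r * \<phi> x"
  shows "dim T \<le> dim {x\<in>T. \<phi> x = 0} + 1"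
proof (cases "\<forall>x\<in>T. \<phi> x = 0")
  case True
  then have "{x\<in>T. \<phi> x = 0} = T" by auto
  then show ?thesis by simp
next
  case False
  then obtain b0 where b0: "b0 \<in> T" "\<phi> b0 \<noteq> 0" by auto
  define T0 where "T0 = {x\<in>T. \<phi> x = 0}"
  obtain K where K: "K \<subseteq> T0" "independent K" "T0 \<subseteq> span K" "card K = dim T0"
    using basis_exists by blast
  have Kfin: "finite K" using independent_span_bound[OF B0 K(2)] K(1) TB unfolding T0_def by auto
  have "T \<subseteq> span (insert b0 K)"
  proof
    fix x assume x: "x \<in> T"
    define r where "r = \<phi> x / \<phi> b0"
    have rb: "scale r b0 \<in> T" using T b0 by (simp add: subspace_def)
    have "x - scale r b0 \<in> T" using T x rb subspace_diff by blast
    moreover have "\<phi> (x - scale r b0) = 0"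
    proof -
      have "\<phi> x = \<phi> ((x - scale r b0) + scale r b0)" by simp
      also have "\<dots> = \<phi> (x - scale r b0) + r * \<phi> b0" using add[OF \<open>x - scale r b0 \<in> T\<close> rb] sc[OF b0(1)] by simp
      finally show ?thesis using b0 by (simp add: r_def)
    qed
    ultimately have "x - scale r b0 \<in> T0" by (simp add: T0_def)
    then have "x - scale r b0 \<in> span (insert b0 K)" using K(3) span_mono[of K "insert b0 K"] by auto
    moreover have "scale r b0 \<in> span (insert b0 K)" by (intro span_scale span_base) simp
    ultimately have "(x - scale r b0) + scale r b0 \<in> span (insert b0 K)" by (rule span_add)
    then show "x \<in> span (insert b0 K)" by simp
  qed
  then have "dim T \<le> card (insert b0 K)" using dim_le_card Kfin by blast
  also have "\<dots> \<le> card K + 1" using card_insert_le_m1 Kfin by (simp add: card_insert_if)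
  finally show ?thesis using K(4) T0_def by simp
qed

lemma dim_ker:
  assumes T: "subspace T" and TB: "T \<subseteq> span B0" and B0: "finite B0" and J: "finite J"
    and add: "\<And>j x y. j \<in> J \<Longrightarrow> x \<in> T \<Longrightarrow> y \<in> T \<Longrightarrow> \<phi> j (x + y) = \<phi> j x + \<phi> j y"
    and sc: "\<And>j r x. j \<in> J \<Longrightarrow> x \<in> T \<Longrightarrow> \<phi> j (scale r x) = r * \<phi> j x"
  shows "dim T \<le> dim {x\<in>T. \<forall>j\<in>J. \<phi> j x = 0} + card J"
  using J add sc
proof (induction J rule: finite_induct)
  case empty then show ?case by simp
next
  case (insert j0 J)
  define S where "S = {x\<in>T. \<forall>j\<in>J. \<phi> j x = 0}"
  have IH: "dim T \<le> dim S + card J" unfolding S_def using insert by auto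
  have S: "subspace S"
    unfolding S_def subspace_def using T insert.prems
    by (auto simp: subspace_def) (metis scale_zero_left sc insert.prems(2) insertCI mult_zero_left T subspace_def)
  have SB: "S \<subseteq> span B0" using TB by (auto simp: S_def)
  have "dim S \<le> dim {x\<in>S. \<phi> j0 x = 0} + 1"
    by (rule dim_ker_step[OF S SB B0]) (auto simp: S_def intro: insert.prems)
  moreover have "{x\<in>S. \<phi> j0 x = 0} = {x\<in>T. \<forall>j\<in>insert j0 J. \<phi> j x = 0}" by (auto simp: S_def)
  ultimately show ?case using IH insert.hyps by simp
qed

end


lemma fun_sum_apply: "(\<Sum>j\<in>S. F j) x = (\<Sum>j\<in>S. F j x)"
proof (cases "finite S")
  case True then show ?thesis by (induction S rule: finite_induct) auto
next
  case False then show ?thesis by simp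
qed

definition Em :: "real^3 \<Rightarrow> 3 \<times> mindex \<Rightarrow> real^3 \<Rightarrow> real^3" where
  "Em x0 j = (\<lambda>x. mono (snd j) (x - x0) *\<^sub>R axis (fst j) 1)"

lemma vec_decomp: "(\<Sum>i\<in>UNIV. (v $ i) *\<^sub>R axis i (1::real)) = (v :: real^3)"
  by (simp add: vec_eq_iff sum_component axis_def if_distrib cong: if_cong)

lemma Pol_as_sum:
  "Pol p x0 c = (\<Sum>j\<in>UNIV \<times> mindices p. fscale (c (snd j) $ fst j) (Em x0 j))"
proof
  fix x
  have "(\<Sum>j\<in>UNIV \<times> mindices p. fscale (c (snd j) $ fst j) (Em x0 j)) x
      = (\<Sum>j\<in>UNIV \<times> mindices p. (c (snd j) $ fst j) *\<^sub>R (mono (snd j) (x - x0) *\<^sub>R axis (fst j) 1))"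
    by (simp add: fun_sum_apply fscale_def Em_def)
  also have "\<dots> = (\<Sum>i\<in>UNIV. \<Sum>a\<in>mindices p. (c a $ i) *\<^sub>R (mono a (x - x0) *\<^sub>R axis i 1))"
    by (simp add: sum.cartesian_product split_def)
  also have "\<dots> = (\<Sum>a\<in>mindices p. \<Sum>i\<in>UNIV. (c a $ i) *\<^sub>R (mono a (x - x0) *\<^sub>R axis i 1))"
    by (rule sum.swap)
  also have "\<dots> = (\<Sum>a\<in>mindices p. mono a (x - x0) *\<^sub>R (\<Sum>i\<in>UNIV. (c a $ i) *\<^sub>R axis i 1))"
    by (simp add: scaleR_sum_right scaleR_scaleR mult.commute)
  also have "\<dots> = Pol p x0 c x" by (simp add: vec_decomp Pol_def)
  finally show "Pol p x0 c x = (\<Sum>j\<in>UNIV \<times> mindices p. fscale (c (snd j) $ fst j) (Em x0 j)) x" by simp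
qed

lemma Em_as_Pol: "a \<in> mindices p \<Longrightarrow> Em x0 (i, a) = Pol p x0 (\<lambda>b. if b = a then axis i 1 else 0)"
  by (simp add: Em_def Pol_def fun_eq_iff if_distrib finite_mindices cong: if_cong)

lemma Pol_add: "Pol p x0 c + Pol p x0 d = Pol p x0 (\<lambda>a. c a + d a)"
  by (simp add: Pol_def fun_eq_iff scaleR_add_right sum.distrib)

lemma Pol_scale: "fscale r (Pol p x0 c) = Pol p x0 (\<lambda>a. r *\<^sub>R c a)"
  by (simp add: Pol_def fscale_def fun_eq_iff scaleR_sum_right mult.commute)

lemma Pol_zero: "Pol p x0 (\<lambda>a. 0) = 0"
  by (simp add: Pol_def fun_eq_iff)

lemma polyfield_Pol: "polyfield p x0 F \<longleftrightarrow> (\<exists>c. F = Pol p x0 c)"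
  by (auto simp: polyfield_def Pol_def fun_eq_iff)

lemma carr_Pol_zero: "(\<forall>l. \<forall>b\<in>mindices p. carr x0 (Pol p x0 c) l b = 0) \<Longrightarrow> Pol p x0 c = 0"
proof -
  assume h: "\<forall>l. \<forall>b\<in>mindices p. carr x0 (Pol p x0 c) l b = 0"
  then have "c b = 0" if "b \<in> mindices p" for b using that by (auto simp: carr_Pol vec_eq_iff)
  then show ?thesis by (simp add: Pol_def fun_eq_iff)
qed


definition Tri :: "nat \<Rightarrow> (nat \<times> nat) set" where
  "Tri n = {(b, c). b + c \<le> n}"

lemma card_diag: "card {(b, c). b + c = (m::nat)} = m + 1"
proof -
  have "{(b, c). b + c = m} = (\<lambda>b. (b, m - b)) ` {0..m}" by (auto simp: image_iff)
  moreover have "inj_on (\<lambda>b. (b, m - b)) {0..m}" by (auto simp: inj_on_def)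
  ultimately show ?thesis by (simp add: card_image)
qed

lemma finite_Tri: "finite (Tri n)"
  by (rule finite_subset[of _ "{0..n} \<times> {0..n}"]) (auto simp: Tri_def)

lemma card_Tri: "2 * card (Tri n) = (n + 1) * (n + 2)"
proof (induction n)
  case 0
  have "Tri 0 = {(0, 0)}" by (auto simp: Tri_def)
  then show ?case by simp
next
  case (Suc n)
  have e: "Tri (Suc n) = Tri n \<union> {(b, c). b + c = Suc n}" by (auto simp: Tri_def)
  have d: "Tri n \<inter> {(b, c). b + c = Suc n} = {}" by (auto simp: Tri_def)
  have f: "finite {(b, c). b + c = Suc n}"
    by (rule finite_subset[of _ "{0..Suc n} \<times> {0..Suc n}"]) auto
  have "card (Tri (Suc n)) = card (Tri n) + (n + 2)"
    unfolding e using card_Un_disjoint[OF finite_Tri f d] card_diag[of "Suc n"] by simp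
  then show ?case using Suc by (simp add: algebra_simps)
qed

lemma card_F1: "card {a \<in> mindices p. fst a = 0 \<and> fst (snd a) \<le> 1} = 2 * p + 1"
proof -
  have e: "{a \<in> mindices p. fst a = 0 \<and> fst (snd a) \<le> 1} = (\<lambda>c. (0, 0, c)) ` {0..p} \<union> (\<lambda>c. (0, 1, c)) ` {0..<p}"
    by (auto simp: mindices_def mdeg_def image_iff le_Suc_eq)
  have "card ((\<lambda>c. (0::nat, 0::nat, c)) ` {0..p} \<union> (\<lambda>c. (0, 1, c)) ` {0..<p}) = (p + 1) + p"
    by (subst card_Un_disjoint) (auto simp: card_image inj_on_def)
  then show ?thesis unfolding e by simp
qed

lemma card_F2: "card {a \<in> mindices p. fst a \<le> 1} = (p + 1) * (p + 1)"
proof (cases p)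
  case 0
  have "{a \<in> mindices p. fst a \<le> 1} = {(0,0,0)}" using 0 by (auto simp: mindices_def mdeg_def)
  then show ?thesis using 0 by simp
next
  case (Suc q)
  have e: "{a \<in> mindices p. fst a \<le> 1} = (\<lambda>(b, c). (0, b, c)) ` Tri p \<union> (\<lambda>(b, c). (1, b, c)) ` Tri q"
    using Suc by (auto simp: mindices_def mdeg_def Tri_def image_iff le_Suc_eq)
  have c1: "card ((\<lambda>(b, c). (0::nat, b, c)) ` Tri p) = card (Tri p)" by (rule card_image) (auto simp: inj_on_def)
  have c2: "card ((\<lambda>(b, c). (1::nat, b, c)) ` Tri q) = card (Tri q)" by (rule card_image) (auto simp: inj_on_def)
  have "card ((\<lambda>(b, c). (0::nat, b, c)) ` Tri p \<union> (\<lambda>(b, c). (1, b, c)) ` Tri q) = card (Tri p) + card (Tri q)"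
    by (subst card_Un_disjoint) (auto simp: finite_Tri card_image inj_on_def)
  moreover have "2 * (card (Tri p) + card (Tri q)) = 2 * ((p + 1) * (p + 1))"
    using card_Tri[of p] card_Tri[of q] Suc by (simp add: algebra_simps)
  ultimately show ?thesis unfolding e by simp
qed

lemma card_Free: "card (Free p) = 2 * p^2 + 6 * p + 3"
proof -
  define F1 where "F1 = {a \<in> mindices p. fst a = 0 \<and> fst (snd a) \<le> 1}"
  define F2 where "F2 = {a \<in> mindices p. fst a \<le> 1}"
  have e: "Free p = {1} \<times> F1 \<union> {2, 3} \<times> F2"
    by (auto simp: Free_def F1_def F2_def) (metis exhaust_3)+
  have f: "finite F1" "finite F2" using finite_mindices by (auto simp: F1_def F2_def)
  have "card (Free p) = card ({1::3} \<times> F1) + card ({2, 3::3} \<times> F2)"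
    unfolding e by (rule card_Un_disjoint) (use f in auto)
  also have "\<dots> = card F1 + 2 * card F2" by (simp add: card_cartesian_product)
  also have "\<dots> = 2 * p^2 + 6 * p + 3" unfolding F1_def F2_def card_F1 card_F2 by (simp add: power2_eq_square algebra_simps)
  finally show ?thesis .
qed


theorem mainTheorem14:
  fixes p :: nat and x0 :: "real^3" and eps :: "real^3 \<Rightarrow> real"
  assumes "p \<ge> 3"
    and "\<exists>U. open U \<and> x0 \<in> U \<and> Ck_on p U eps"
    and "eps x0 \<noteq> 0"
  shows "vector_space.dim fscale (QT p x0 eps) = 2 * p^2 + 6 * p + 3"
proof -
  obtain U where U: "open U" "x0 \<in> U" "Ck_on p U eps" using assms(2) by blast
  have p2: "p \<ge> 2" using assms(1) by simp
  define e where "e = (\<lambda>d. coef x0 d eps)"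
  have e0: "e (0,0,0) \<noteq> 0" using assms(3) by (simp add: e_def coef_zero)
  define Idx where "Idx = (UNIV :: 3 set) \<times> mindices p"
  define W where "W = range (Pol p x0)"
  define B where "B = Em x0 ` Idx"
  have finIdx: "finite Idx" unfolding Idx_def by (simp add: finite_mindices)
  have finB: "finite B" unfolding B_def using finIdx by simp
  have WB: "W \<subseteq> FS.span B"
  proof
    fix x assume "x \<in> W"
    then obtain c where x: "x = Pol p x0 c" by (auto simp: W_def)
    show "x \<in> FS.span B" unfolding x Pol_as_sum
      by (intro FS.span_sum FS.span_scale FS.span_base) (auto simp: B_def Idx_def)
  qed
  have BW: "B \<subseteq> W" unfolding B_def Idx_def W_def using Em_as_Pol by auto
  have Wsub: "FS.subspace W"
    unfolding FS.subspace_def W_def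
  proof (intro conjI ballI allI)
    show "0 \<in> range (Pol p x0)" using Pol_zero[of p x0] by (metis rangeI)
  qed (auto simp: Pol_add Pol_scale)
  have carr_add: "carr x0 (x + y) = (\<lambda>i a. carr x0 x i a + carr x0 y i a)" if "x \<in> W" "y \<in> W" for x y
    using that by (auto simp: W_def Pol_add carr_Pol fun_eq_iff)
  have carr_sc: "carr x0 (fscale r x) = (\<lambda>i a. r * carr x0 x i a)" if "x \<in> W" for x r
    using that by (auto simp: W_def Pol_scale carr_Pol fun_eq_iff)
  have carr_Em: "carr x0 (Em x0 (i', a')) i a = (if a = a' \<and> i = i' then 1 else 0)"
    if "a \<in> mindices p" "a' \<in> mindices p" for i a i' a'
    using that by (simp add: Em_as_Pol carr_Pol axis_def)
  have inj: "inj_on (Em x0) Idx"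
  proof (rule inj_onI)
    fix j j' assume j: "j \<in> Idx" "j' \<in> Idx" and eq: "Em x0 j = Em x0 j'"
    obtain i a i' a' where jj: "j = (i, a)" "j' = (i', a')" by (cases j; cases j') auto
    have "carr x0 (Em x0 (i, a)) i a = carr x0 (Em x0 (i', a')) i a" using eq jj by simp
    then show "j = j'" using carr_Em j jj by (auto simp: Idx_def split: if_splits)
  qed
  have indep: "FS.independent B"
  proof (rule FS.independent_if_scalars_zero[OF finB])
    fix f v assume s: "(\<Sum>x\<in>B. fscale (f x) x) = 0" and v: "v \<in> B"
    define c where "c a = (\<chi> i. f (Em x0 (i, a)))" for a
    have "Pol p x0 c = (\<Sum>j\<in>Idx. fscale (f (Em x0 j)) (Em x0 j))"
      unfolding Pol_as_sum Idx_def c_def by (intro sum.cong refl) auto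
    also have "\<dots> = (\<Sum>x\<in>B. fscale (f x) x)"
      unfolding B_def by (rule sum.reindex[OF inj, symmetric, unfolded comp_def])
    finally have P0: "Pol p x0 c = 0" using s by simp
    obtain i a where va: "v = Em x0 (i, a)" "a \<in> mindices p" using v by (auto simp: B_def Idx_def)
    have "carr x0 (Pol p x0 c) i a = f v" using va by (simp add: carr_Pol c_def)
    moreover have "carr x0 (0 :: real^3 \<Rightarrow> real^3) i a = 0" by (simp add: carr_def coef_const)
    ultimately show "f v = 0" using P0 by simp
  qed
  have dimW: "FS.dim W = card Idx"
  proof -
    have "FS.span W = FS.span B"
      using FS.span_minimal[OF WB FS.subspace_span] FS.span_mono[OF BW] by auto
    then have "FS.dim W = FS.dim B" by (rule FS.span_eq_dim)
    also have "\<dots> = card B" by (rule FS.dim_eq_card_independent[OF indep])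
    also have "\<dots> = card Idx" unfolding B_def by (rule card_image[OF inj])
    finally show ?thesis .
  qed
  have QTW: "QT p x0 eps = {x\<in>W. \<forall>j\<in>NF p. Eq p e (carr x0 x) j = 0}"
  proof (intro set_eqI iffI)
    fix x assume x: "x \<in> QT p x0 eps"
    then obtain c where c: "x = Pol p x0 c" by (auto simp: QT_def polyfield_Pol)
    show "x \<in> {x\<in>W. \<forall>j\<in>NF p. Eq p e (carr x0 x) j = 0}"
      using x QT_iff[OF U p2, of c] EQV[OF p2, of e "carr x0 (Pol p x0 c)"] unfolding c e_def W_def by auto
  next
    fix x assume x: "x \<in> {x\<in>W. \<forall>j\<in>NF p. Eq p e (carr x0 x) j = 0}"
    then obtain c where c: "x = Pol p x0 c" by (auto simp: W_def)
    show "x \<in> QT p x0 eps"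
      using x QT_iff[OF U p2, of c] EQV[OF p2, of e "carr x0 (Pol p x0 c)"] unfolding c e_def by auto
  qed
  have FreeIdx: "Free p \<subseteq> Idx" by (auto simp: Free_def Idx_def)
  have cardNF: "card (NF p) = card Idx - card (Free p)"
    unfolding NF_def Idx_def[symmetric] by (rule card_Diff_subset[OF finite_subset[OF FreeIdx finIdx] FreeIdx])
  have finNF: "finite (NF p)" unfolding NF_def Idx_def[symmetric] using finIdx by simp
  have lower: "FS.dim W \<le> FS.dim (QT p x0 eps) + card (NF p)"
    unfolding QTW
    by (rule FS.dim_ker[OF Wsub WB finB finNF, of "\<lambda>j x. Eq p e (carr x0 x) j"])
       (simp_all add: carr_add carr_sc Eq_add Eq_scale)
  have cF: "card (Free p) \<le> card Idx" by (rule card_mono[OF finIdx FreeIdx])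
  have ge: "card (Free p) \<le> FS.dim (QT p x0 eps)" using lower dimW cardNF cF by simp
  have QTsub: "FS.subspace (QT p x0 eps)"
    unfolding QTW FS.subspace_def
  proof (intro conjI ballI allI)
    have z: "(0 :: real^3 \<Rightarrow> real^3) \<in> W" using Wsub by (simp add: FS.subspace_def)
    have c0: "carr x0 (0 :: real^3 \<Rightarrow> real^3) = (\<lambda>i a. 0 * (0::real))"
      by (simp add: carr_def coef_const fun_eq_iff)
    have "Eq p e (\<lambda>i a. 0 * (0::real)) j = 0" for j by (rule trans[OF Eq_scale]) simp
    then show "(0 :: real^3 \<Rightarrow> real^3) \<in> {x \<in> W. \<forall>j\<in>NF p. Eq p e (carr x0 x) j = 0}"
      using z c0 by simp
  next
    fix x y assume "x \<in> {x \<in> W. \<forall>j\<in>NF p. Eq p e (carr x0 x) j = 0}" "y \<in> {x \<in> W. \<forall>j\<in>NF p. Eq p e (carr x0 x) j = 0}"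
    then show "x + y \<in> {x \<in> W. \<forall>j\<in>NF p. Eq p e (carr x0 x) j = 0}"
      using Wsub by (auto simp: FS.subspace_def carr_add Eq_add)
  next
    fix r x assume "x \<in> {x \<in> W. \<forall>j\<in>NF p. Eq p e (carr x0 x) j = 0}"
    then show "fscale r x \<in> {x \<in> W. \<forall>j\<in>NF p. Eq p e (carr x0 x) j = 0}"
      using Wsub by (auto simp: FS.subspace_def carr_sc Eq_scale)
  qed
  have QTB: "QT p x0 eps \<subseteq> FS.span B" using WB QTW by auto
  have finFree: "finite (Free p)" using finite_subset[OF FreeIdx finIdx] .
  define K where "K = {x\<in>QT p x0 eps. \<forall>j\<in>Free p. carr x0 x (fst j) (snd j) = 0}"
  have upper: "FS.dim (QT p x0 eps) \<le> FS.dim K + card (Free p)"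
    unfolding K_def
    by (rule FS.dim_ker[OF QTsub QTB finB finFree, of "\<lambda>j x. carr x0 x (fst j) (snd j)"])
       (use QTW in \<open>auto simp: carr_add carr_sc\<close>)
  have K0: "K \<subseteq> {0}"
  proof
    fix x assume x: "x \<in> K"
    then have xQ: "x \<in> QT p x0 eps" by (simp add: K_def)
    then obtain c where c: "x = Pol p x0 c" by (auto simp: QT_def polyfield_Pol)
    define C where "C = carr x0 (Pol p x0 c)"
    have H: "(\<forall>i. \<forall>b\<in>mindices (p - 2). Af p e C i b = 0) \<and> (\<forall>b\<in>mindices (p - 1). Bf p e C b = 0)"
      using QT_iff[OF U p2, of c] xQ unfolding c C_def e_def by simp
    have C0: "C i a = 0" for i a
    proof (rule pivot[of p C e])
      show "\<And>i a. a \<notin> mindices p \<Longrightarrow> C i a = 0" by (simp add: C_def carr_Pol)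
      show "e (0,0,0) \<noteq> 0" by (rule e0)
      show "\<And>i b. mdeg b + 2 \<le> p \<Longrightarrow> Af p e C i b = 0" using H by (auto simp: mindices_def)
      show "\<And>b. mdeg b + 1 \<le> p \<Longrightarrow> Bf p e C b = 0" using H by (auto simp: mindices_def)
      show "\<And>i a. (i, a) \<in> Free p \<Longrightarrow> C i a = 0" using x unfolding K_def c C_def by auto
    qed
    have "Pol p x0 c = 0" by (rule carr_Pol_zero) (use C0 C_def in simp)
    then show "x \<in> {0}" using c by simp
  qed
  have "FS.dim K \<le> card ({} :: (real^3 \<Rightarrow> real^3) set)"
    by (rule FS.dim_le_card) (use K0 in auto)
  then have "FS.dim K = 0" by simp
  then have le: "FS.dim (QT p x0 eps) \<le> card (Free p)" using upper by simp
  show ?thesis using ge le card_Free by simp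
qed


end
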